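(* Let $\mathbf{M}$ be a strongly regular sequence, $S=S(d,\alpha)$ a sector, $f\in\mathcal{A}^{(\mathbf{M})}(S)$, $0<\delta<\gamma(\mathbf{M})$, and $\tau\in\mathbb{R}$ with $|\tau-d|<\alpha\pi/2$. Then the $\mathbf{M}$-Laplace transform $$(\mathcal{L}^\tau_{\mathbf{M}}f)(z)=\int_0^{\infty(\tau)}e_{\mathbf{M}}\Big(\frac{u}{z}\Big)f(u)\frac{du}{u}$$ (integral along the ray $t\mapsto te^{i\tau}$, $t\in(0,\infty)$) is well defined and holomorphic for $z\in\mathcal{R}$ with $|\arg z-\tau|<\delta\pi/2$ and $|z|$ small enough. Moreover, the family $\{\mathcal{L}^\tau_{\mathbf{M}}f\}_{|\tau-d|<\alpha\pi/2}$ defines a holomorphic function $\mathcal{L}_{\mathbf{M}}f$ in a sectorial region $G(d,\alpha+\delta)$.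
   Context: A sequence $\mathbf{M}=(M_p)_{p\ge0}$ of positive reals with $M_0=1$ is strongly regular if: ($\alpha_0$) $M_p^2\le M_{p-1}M_{p+1}$ for $p\ge1$; ($\mu$) there is $A>0$ with $M_{p+\ell}\le A^{p+\ell}M_pM_\ell$; ($\gamma_1$) there is $B>0$ with $\sum_{\ell\ge p}\frac{M_\ell}{(\ell+1)M_{\ell+1}}\le B\frac{M_p}{M_{p+1}}$. Put $m_p=M_{p+1}/M_p$, $h_{\mathbf{M}}(t)=\inf_pM_pt^p$ ($t>0$), $h_{\mathbf{M}}(0)=0$. $\mathbf{M}$ satisfies $(P_\gamma)$ if there are reals $(m'_p)$, $a\ge1$ with $a^{-1}m_p\le m'_p\le am_p$ and $((p+1)^{-\gamma}m'_p)_p$ increasing; $\gamma(\mathbf{M})=\sup\{\gamma:(P_\gamma)\}\in(0,\infty)$. $\mathcal{R}$ is the Riemann surface of the logarithm, $S(d,\alpha)=\{z\in\mathcal{R}:|\arg z-d|<\alpha\pi/2\}$, $S_\gamma=S(0,\gamma)$. A sectorial region $G(d,\alpha)$ is a domain $G\subset S(d,\alpha)$ such that for every $\beta\in(0,\alpha)$ there is $\rho>0$ with $\{z:|\arg z-d|<\beta\pi/2,|z|<\rho\}\subset G$. A sector $T=S(d',\theta')$ is an unbounded proper subsector of $S(d,\alpha)$ if $[d'-\theta'\pi/2,d'+\theta'\pi/2]\subset(d-\alpha\pi/2,d+\alpha\pi/2)$. A holomorphic $f$ on $S$ is continuous at the origin if $\lim_{z\to0,z\in T}f(z)$ exists for every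 bounded proper subsector $T$ of $S$. $\mathcal{A}^{(\mathbf{M})}(S)$ is the set of holomorphic $f$ on $S$, continuous at 0, such that for every unbounded proper subsector $T$ of $S$ there are $r,k_4,k_5>0$ with $|f(z)|\le k_4/h_{\mathbf{M}}(k_5/|z|)$ for $z\in T$, $|z|\ge r$. Kernel: fix $\delta_1,s$ with $\delta<\delta_1<\gamma(\mathbf{M})$, $s\delta_1<1<s\gamma(\mathbf{M})$, $\mathbf{M}^s=(M_p^s)$, $G_{\mathbf{M}}(z)=\exp\big(\frac{1}{\pi}\int_{-\infty}^{\infty}\log(h_{\mathbf{M}^s}(|t|))\frac{itz^s-1}{it-z^s}\frac{dt}{1+t^2}\big)$ for $z\in S_{\delta_1}$, and $e_{\mathbf{M}}(z)=zG_{\mathbf{M}}(1/z)$ for $z\in S_\delta$. *)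

theory Defs
  imports "HOL-Analysis.Analysis"
begin

text \<open>Points of the Riemann surface of the logarithm are represented by their
  logarithmic coordinate w :: complex, i.e. z = exp w with |z| = exp (Re w) and
  arg z = Im w.  A function on (a subset of) the Riemann surface is a function
  of the logarithmic coordinate; holomorphy is holomorphy in w.\<close>

definition strongly_regular :: "(nat \<Rightarrow> real) \<Rightarrow> bool" where
  "strongly_regular M \<longleftrightarrow>
     M 0 = 1 \<and> (\<forall>p. M p > 0) \<and>
     (\<forall>p\<ge>1. (M p)\<^sup>2 \<le> M (p - 1) * M (p + 1)) \<and>
     (\<exists>A>0. \<forall>p l. M (p + l) \<le> A ^ (p + l) * M p * M l) \<and>
     (\<exists>B>0. \<forall>p. summable (\<lambda>l. M (l + p) / ((real (l + p) + 1) * M (l + p + 1))) \<and>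
        (\<Sum>l. M (l + p) / ((real (l + p) + 1) * M (l + p + 1))) \<le> B * M p / M (p + 1))"

definition quot_seq :: "(nat \<Rightarrow> real) \<Rightarrow> nat \<Rightarrow> real" where
  "quot_seq M p = M (p + 1) / M p"

definition P_gamma :: "real \<Rightarrow> (nat \<Rightarrow> real) \<Rightarrow> bool" where
  "P_gamma g M \<longleftrightarrow> (\<exists>m' :: nat \<Rightarrow> real. \<exists>a::real. a \<ge> 1 \<and>
     (\<forall>p. quot_seq M p / a \<le> m' p \<and> m' p \<le> a * quot_seq M p) \<and>
     mono (\<lambda>p. m' p / (real p + 1) powr g))"

definition gammaM :: "(nat \<Rightarrow> real) \<Rightarrow> real" where
  "gammaM M = Sup {g. P_gamma g M}"

definition hM :: "(nat \<Rightarrow> real) \<Rightarrow> real \<Rightarrow> real" where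
  "hM M t = (if t > 0 then (INF p. M p * t ^ p) else 0)"

definition sector :: "real \<Rightarrow> real \<Rightarrow> complex set" where
  "sector d \<alpha> = {w. \<bar>Im w - d\<bar> < \<alpha> * pi / 2}"

definition bsector :: "real \<Rightarrow> real \<Rightarrow> real \<Rightarrow> complex set" where
  "bsector d \<beta> \<rho> = {w. \<bar>Im w - d\<bar> < \<beta> * pi / 2 \<and> exp (Re w) < \<rho>}"

definition proper_subsector :: "real \<Rightarrow> real \<Rightarrow> real \<Rightarrow> real \<Rightarrow> bool" where
  "proper_subsector d' \<theta>' d \<alpha> \<longleftrightarrow> \<theta>' > 0 \<and>
     d - \<alpha> * pi / 2 < d' - \<theta>' * pi / 2 \<and> d' + \<theta>' * pi / 2 < d + \<alpha> * pi / 2"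

definition sectorial_region :: "complex set \<Rightarrow> real \<Rightarrow> real \<Rightarrow> bool" where
  "sectorial_region G d \<alpha> \<longleftrightarrow> open G \<and> connected G \<and> G \<noteq> {} \<and> G \<subseteq> sector d \<alpha> \<and>
     (\<forall>\<beta>. 0 < \<beta> \<and> \<beta> < \<alpha> \<longrightarrow> (\<exists>\<rho>>0. bsector d \<beta> \<rho> \<subseteq> G))"

definition cont_at_origin :: "(complex \<Rightarrow> complex) \<Rightarrow> real \<Rightarrow> real \<Rightarrow> bool" where
  "cont_at_origin f d \<alpha> \<longleftrightarrow>
     (\<forall>d' \<theta>' \<rho>. proper_subsector d' \<theta>' d \<alpha> \<and> \<rho> > 0 \<longrightarrow>
        (\<exists>L. \<forall>\<epsilon>>0. \<exists>\<eta>>0. \<forall>w\<in>bsector d' \<theta>' \<rho>. exp (Re w) < \<eta> \<longrightarrow> cmod (f w - L) < \<epsilon>))"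

definition AM :: "(nat \<Rightarrow> real) \<Rightarrow> real \<Rightarrow> real \<Rightarrow> (complex \<Rightarrow> complex) set" where
  "AM M d \<alpha> = {f. f holomorphic_on sector d \<alpha> \<and> cont_at_origin f d \<alpha> \<and>
     (\<forall>d' \<theta>'. proper_subsector d' \<theta>' d \<alpha> \<longrightarrow>
        (\<exists>r k4 k5. r > 0 \<and> k4 > 0 \<and> k5 > 0 \<and>
          (\<forall>w\<in>sector d' \<theta>'. exp (Re w) \<ge> r \<longrightarrow> cmod (f w) \<le> k4 / hM M (k5 / exp (Re w)))))}"

text \<open>The function G_M, in logarithmic coordinates (z^s = exp (s w)).\<close>
definition GM :: "(nat \<Rightarrow> real) \<Rightarrow> real \<Rightarrow> complex \<Rightarrow> complex" where
  "GM M s w = exp (complex_of_real (1 / pi) *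
     (LINT t|lborel. complex_of_real (ln (hM (\<lambda>p. M p powr s) \<bar>t\<bar>)) *
        ((\<i> * t * exp (s * w) - 1) / (\<i> * t - exp (s * w))) / complex_of_real (1 + t\<^sup>2)))"

text \<open>The kernel e_M(z) = z G_M(1/z), in logarithmic coordinates.\<close>
definition eM :: "(nat \<Rightarrow> real) \<Rightarrow> real \<Rightarrow> complex \<Rightarrow> complex" where
  "eM M s w = exp w * GM M s (- w)"

text \<open>Integrand of the M-Laplace transform along the ray u = t e^{i tau}
  (du/u = dt/t); log coordinate of u is ln t + i tau, that of u/z is ln t + i tau - w.\<close>
definition lap_integrand :: "(nat \<Rightarrow> real) \<Rightarrow> real \<Rightarrow> (complex \<Rightarrow> complex) \<Rightarrow> real \<Rightarrow> complex \<Rightarrow> real \<Rightarrow> complex" where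
  "lap_integrand M s f \<tau> w t =
     eM M s (complex_of_real (ln t) + \<i> * complex_of_real \<tau> - w) *
     f (complex_of_real (ln t) + \<i> * complex_of_real \<tau>) / complex_of_real t"

definition LapM :: "(nat \<Rightarrow> real) \<Rightarrow> real \<Rightarrow> (complex \<Rightarrow> complex) \<Rightarrow> real \<Rightarrow> complex \<Rightarrow> complex" where
  "LapM M s f \<tau> w = (LINT t:{0<..}|lborel. lap_integrand M s f \<tau> w t)"

end

theory Submission
  imports Defs "HOL-Complex_Analysis.Complex_Analysis"
begin


lemma holo_param_integral:
  fixes k :: "complex \<Rightarrow> real \<Rightarrow> complex"
  assumes U: "open U"
    and meas: "\<And>w. w \<in> U \<Longrightarrow> k w \<in> borel_measurable lborel"
    and hol: "\<And>t. (\<lambda>w. k w t) holomorphic_on U"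
    and dom: "\<And>w0. w0 \<in> U \<Longrightarrow> \<exists>r>0. \<exists>g. cball w0 r \<subseteq> U \<and> integrable lborel g \<and>
                  (\<forall>w\<in>cball w0 r. \<forall>t. norm (k w t) \<le> g t)"
  shows "(\<lambda>w. \<integral>t. k w t \<partial>lborel) holomorphic_on U"
  unfolding holomorphic_on_open[OF U]
proof
  fix w0 assume w0: "w0 \<in> U"
  obtain r g where r: "r > 0" and sub: "cball w0 r \<subseteq> U" and gi: "integrable lborel g"
    and gb: "\<And>w t. w \<in> cball w0 r \<Longrightarrow> norm (k w t) \<le> g t"
    using dom[OF w0] by blast
  define D where "D t = deriv (\<lambda>w. k w t) w0" for t
  have hd: "((\<lambda>w. k w t) has_field_derivative deriv (\<lambda>w. k w t) w) (at w)" if "w \<in> U" for w t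
    using hol[of t] U that by (simp add: holomorphic_derivI)
  have hdd: "((\<lambda>w. deriv (\<lambda>w. k w t) w) has_field_derivative deriv (deriv (\<lambda>w. k w t)) w) (at w)"
    if "w \<in> U" for w t
    using holomorphic_deriv[OF hol[of t] U] U that by (simp add: holomorphic_derivI)
  have g0: "g t \<ge> 0" for t using gb[of w0 t] r by (smt (verit) centre_in_cball norm_ge_zero)
  have ballU: "ball w0 r \<subseteq> U" using sub by auto
  have Db: "norm (D t) \<le> g t / r" for t
  proof -
    have "norm ((deriv ^^ 1) (\<lambda>w. k w t) w0) \<le> fact 1 * g t / r ^ 1"
      apply (rule Cauchy_inequality)
      using holomorphic_on_subset[OF hol ballU] 
        holomorphic_on_imp_continuous_on[OF holomorphic_on_subset[OF hol sub]] r gb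
      by (auto simp: dist_norm norm_minus_commute)
    then show ?thesis by (simp add: D_def)
  qed
  have DDb: "norm (deriv (deriv (\<lambda>w. k w t)) u) \<le> 8 * g t / r^2" if u: "u \<in> cball w0 (r/2)" for t u
  proof -
    have cs: "cball u (r/2) \<subseteq> cball w0 r" using u
      apply (auto simp: dist_norm)
      subgoal for x using norm_triangle_ineq[of "w0 - u" "u - x"] by simp
      done
    have c1: "cball u (r/2) \<subseteq> U" using cs sub by auto
    have "norm ((deriv ^^ 2) (\<lambda>w. k w t) u) \<le> fact 2 * g t / (r/2) ^ 2"
      apply (rule Cauchy_inequality)
      using holomorphic_on_subset[OF hol[of t], of "ball u (r/2)"] c1 r
        holomorphic_on_imp_continuous_on[OF holomorphic_on_subset[OF hol[of t] c1]]
      apply auto[3]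
      using cs gb by (auto simp: dist_norm norm_minus_commute subset_iff)
    then show ?thesis by (simp add: numeral_2_eq_2 power2_eq_square field_simps)
  qed
  have tay: "norm (k (w0 + h) t - k w0 t - h * D t) \<le> 8 * g t / r^2 * norm h ^ 2"
    if h: "norm h \<le> r/2" for h t
  proof -
    let ?S = "cball w0 (norm h)"
    have S: "?S \<subseteq> cball w0 (r/2)" using h by auto
    have SU: "?S \<subseteq> U" using S sub subset_cball[of "r/2" r w0] r by auto
    have b1: "norm (deriv (\<lambda>w. k w t) u - D t) \<le> 8 * g t / r^2 * norm h" if "u \<in> ?S" for u
    proof -
      have "norm (deriv (\<lambda>w. k w t) u - deriv (\<lambda>w. k w t) w0) \<le> 8 * g t / r^2 * norm (u - w0)"
        apply (rule field_differentiable_bound[of "cball w0 (r/2)" _ "deriv (deriv (\<lambda>w. k w t))"])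
        apply simp
        subgoal for z apply (rule has_field_derivative_at_within, rule hdd)
          using sub r subset_cball[of "r/2" r w0] by auto
        using DDb that S r by auto
      also have "\<dots> \<le> 8 * g t / r^2 * norm h"
        using that g0[of t] r by (intro mult_left_mono) (auto simp: dist_norm norm_minus_commute)
      finally show ?thesis by (simp add: D_def)
    qed
    have "norm ((k (w0+h) t - (w0+h) * D t) - (k w0 t - w0 * D t)) \<le> (8 * g t / r^2 * norm h) * norm ((w0+h) - w0)"
      apply (rule field_differentiable_bound[of ?S _ "\<lambda>u. deriv (\<lambda>w. k w t) u - D t"])
      apply simp
      subgoal for z
        apply (rule has_field_derivative_at_within)
        using DERIV_diff[OF hd[of z t] DERIV_cmult_right[OF DERIV_ident, of "D t"]] SU by auto
      using b1 by (auto simp: dist_norm)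
    then show ?thesis by (simp add: algebra_simps power2_eq_square)
  qed
  have Dm: "D \<in> borel_measurable lborel"
  proof (rule borel_measurable_LIMSEQ_metric[where f="\<lambda>n t. (k (w0 + of_real (r / (Suc (Suc n)))) t - k w0 t) / of_real (r / (Suc (Suc n)))"])
    fix n :: nat
    have e: "0 \<le> r / real (Suc (Suc n)) \<and> r / real (Suc (Suc n)) \<le> r" using r by (auto simp: field_simps)
    have "w0 + complex_of_real (r / real (Suc (Suc n))) \<in> cball w0 r"
      using e unfolding mem_cball dist_norm by (simp del: of_real_divide of_nat_Suc add: abs_of_nonneg)
    then have "w0 + of_real (r / (Suc (Suc n))) \<in> U" using sub by auto
    then show "(\<lambda>t. (k (w0 + of_real (r / (Suc (Suc n)))) t - k w0 t) / of_real (r / (Suc (Suc n)))) \<in> borel_measurable lborel"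
      using meas w0 by measurable
  next
    fix t
    have lim: "(\<lambda>n. of_real (r / (Suc (Suc n))) :: complex) \<longlonglongrightarrow> 0"
    proof -
      have "(\<lambda>n. r / real n) \<longlonglongrightarrow> 0" by (rule lim_const_over_n)
      from LIMSEQ_ignore_initial_segment[OF this, of 2]
      have "(\<lambda>n. r / real (Suc (Suc n))) \<longlonglongrightarrow> 0" by (simp add: numeral_2_eq_2)
      from tendsto_of_real[OF this, where 'a=complex] show ?thesis by simp
    qed
    have lim': "filterlim (\<lambda>n. of_real (r / (Suc (Suc n))) :: complex) (at 0) sequentially"
    proof -
      have nz: "\<forall>n. complex_of_real (r / real (Suc (Suc n))) \<noteq> 0" using r by (simp del: of_real_divide of_nat_Suc)
      show ?thesis by (rule filterlim_atI[OF lim always_eventually[OF nz]])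
    qed
    have "((\<lambda>h. (k (w0 + h) t - k w0 t) / h) \<longlongrightarrow> D t) (at 0)"
      using hd[OF w0, of t] unfolding DERIV_def D_def .
    from filterlim_compose[OF this lim'] show "(\<lambda>n. (k (w0 + of_real (r / (Suc (Suc n)))) t - k w0 t) / of_real (r / (Suc (Suc n)))) \<longlonglongrightarrow> D t"
      by (simp add: o_def)
  qed
  have Di: "integrable lborel D"
    apply (rule Bochner_Integration.integrable_bound[of _ "\<lambda>t. g t / r"])
    using gi Dm Db g0 r by (auto intro!: AE_I2 simp: abs_of_nonneg)
  have ki: "integrable lborel (k w)" if "w \<in> cball w0 r" for w
    apply (rule Bochner_Integration.integrable_bound[OF gi])
    using meas[of w] that sub gb g0 by (auto intro!: AE_I2)
  show "\<exists>f'. ((\<lambda>w. \<integral>t. k w t \<partial>lborel) has_field_derivative f') (at w0)"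
  proof (intro exI)
    show "((\<lambda>w. \<integral>t. k w t \<partial>lborel) has_field_derivative (\<integral>t. D t \<partial>lborel)) (at w0)"
      unfolding DERIV_def
    proof -
      define F where "F w = (\<integral>t. k w t \<partial>lborel)" for w
      define I where "I = (\<integral>t. g t \<partial>lborel)"
      have key: "norm ((F (w0+h) - F w0) / h - (\<integral>t. D t \<partial>lborel)) \<le> 8 / r^2 * I * norm h"
        if h0: "h \<noteq> 0" and hr: "norm h \<le> r/2" for h
      proof -
        have m1: "w0 + h \<in> cball w0 r" using hr r by (simp add: dist_norm)
        have m0: "w0 \<in> cball w0 r" using r by simp
        have i1: "integrable lborel (k (w0+h))" using ki[OF m1] .
        have i0: "integrable lborel (k w0)" using ki[OF m0] .
        have iD: "integrable lborel (\<lambda>t. h * D t)" using Di by simp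
        have eq: "F (w0+h) - F w0 - h * (\<integral>t. D t \<partial>lborel) = (\<integral>t. (k (w0+h) t - k w0 t - h * D t) \<partial>lborel)"
          unfolding F_def using i1 i0 iD by (simp add: Bochner_Integration.integral_diff)
        have ig: "integrable lborel (\<lambda>t. 8 * g t / r^2 * norm h ^ 2)" using gi by simp
        have "norm (\<integral>t. (k (w0+h) t - k w0 t - h * D t) \<partial>lborel) \<le> (\<integral>t. 8 * g t / r^2 * norm h ^ 2 \<partial>lborel)"
        proof -
          have ii: "integrable lborel (\<lambda>t. k (w0+h) t - k w0 t - h * D t)" using i1 i0 iD by auto
          have "norm (\<integral>t. (k (w0+h) t - k w0 t - h * D t) \<partial>lborel) \<le> (\<integral>t. norm (k (w0+h) t - k w0 t - h * D t) \<partial>lborel)"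
            by (rule integral_norm_bound)
          also have "\<dots> \<le> (\<integral>t. 8 * g t / r^2 * norm h ^ 2 \<partial>lborel)"
            apply (rule integral_mono) using ii ig tay[OF hr] by (auto simp: algebra_simps)
          finally show ?thesis .
        qed
        also have "\<dots> = 8 / r^2 * I * norm h ^ 2" unfolding I_def by simp
        finally have b: "norm (F (w0+h) - F w0 - h * (\<integral>t. D t \<partial>lborel)) \<le> 8 / r^2 * I * norm h ^ 2"
          using eq by simp
        have "(F (w0+h) - F w0) / h - (\<integral>t. D t \<partial>lborel) = (F (w0+h) - F w0 - h * (\<integral>t. D t \<partial>lborel)) / h"
          using h0 by (simp add: field_simps)
        then have "norm ((F (w0+h) - F w0) / h - (\<integral>t. D t \<partial>lborel)) = norm (F (w0+h) - F w0 - h * (\<integral>t. D t \<partial>lborel)) / norm h"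
          by (simp add: norm_divide)
        also have "\<dots> \<le> 8 / r^2 * I * norm h ^ 2 / norm h"
          using divide_right_mono[OF b, of "norm h"] by simp
        also have "\<dots> = 8 / r^2 * I * norm h" using h0 by (simp add: power2_eq_square)
        finally show ?thesis .
      qed
      have ev: "\<forall>\<^sub>F h in at 0. norm ((F (w0+h) - F w0) / h - (\<integral>t. D t \<partial>lborel)) \<le> 8 / r^2 * I * norm h"
      proof -
        have "\<forall>\<^sub>F h in at (0::complex). h \<noteq> 0 \<and> norm h < r/2"
          using r by (auto simp: eventually_at dist_norm intro!: exI[of _ "r/2"])
        then show ?thesis by eventually_elim (rule key, auto)
      qed
      have l0: "((\<lambda>h. 8 / r^2 * I * norm h) \<longlongrightarrow> 0) (at (0::complex))"
        using r by (auto intro!: tendsto_eq_intros)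
      have "((\<lambda>h. (F (w0+h) - F w0) / h - (\<integral>t. D t \<partial>lborel)) \<longlongrightarrow> 0) (at 0)"
        by (rule Lim_null_comparison[OF ev l0])
      then show "((\<lambda>h. ((\<integral>t. k (w0 + h) t \<partial>lborel) - (\<integral>t. k w0 t \<partial>lborel)) / h) \<longlongrightarrow> (\<integral>t. D t \<partial>lborel)) (at 0)"
        unfolding F_def by (simp add: LIM_zero_iff)
    qed
  qed
qed



declare [[smt_timeout = 20]]
section \<open>Basic facts on hM\<close>

lemma hM_bdd: "(\<forall>p. (N::nat\<Rightarrow>real) p > 0) \<Longrightarrow> t > 0 \<Longrightarrow> bdd_below (range (\<lambda>p. N p * t ^ p))"
  by (rule bdd_belowI[of _ 0]) (auto intro!: mult_nonneg_nonneg less_imp_le)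

lemma hM_le: assumes "\<forall>p. N p > 0" "t > 0" shows "hM N t \<le> N p * t ^ p"
  unfolding hM_def using assms by (auto intro!: cINF_lower hM_bdd)

lemma hM_nonneg: assumes "\<forall>p. N p > 0" shows "hM N t \<ge> 0"
proof (cases "t > 0")
  case True
  have "0 \<le> (INF p. N p * t ^ p)"
    by (rule cINF_greatest) (use assms True in \<open>auto intro!: mult_nonneg_nonneg less_imp_le\<close>)
  then show ?thesis unfolding hM_def using True by simp
qed (simp add: hM_def)

lemma hM_ge: assumes "t > 0" "\<And>p. c \<le> N p * t ^ p" shows "c \<le> hM N t"
  unfolding hM_def using assms by (auto intro!: cINF_greatest)

lemma hM_le1: assumes "\<forall>p. N p > 0" "N 0 = 1" "t > 0" shows "hM N t \<le> 1"
  using hM_le[OF assms(1,3), of 0] assms(2) by simp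

lemma hM_mono: assumes "\<forall>p. N p > 0" "t \<le> t'" shows "hM N t \<le> hM N t'"
proof (cases "t > 0")
  case True
  show ?thesis
  proof (rule hM_ge)
    show "0 < t'" using True assms by simp
    fix p
    have "hM N t \<le> N p * t ^ p" by (rule hM_le[OF assms(1) True])
    also have "\<dots> \<le> N p * t' ^ p" using assms True by (intro mult_left_mono power_mono) (auto intro: less_imp_le)
    finally show "hM N t \<le> N p * t' ^ p" .
  qed
next
  case False
  then show ?thesis using hM_nonneg[OF assms(1)] by (simp add: hM_def)
qed

lemma hM_mono': "\<forall>p. N p > 0 \<Longrightarrow> mono (hM N)"
  by (auto intro: monoI hM_mono)

lemma hM_sq:
  assumes pos: "\<forall>p. N p > 0" and A: "A > 0" and mu: "\<And>p l. N (p + l) \<le> A ^ (p + l) * N p * N l"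
    and t: "t > 0"
  shows "hM N (t / A) \<le> (hM N t)\<^sup>2"
proof -
  let ?h = "hM N t"
  have tA: "t / A > 0" using t A by simp
  have 1: "hM N (t / A) \<le> (N p * t ^ p) * (N q * t ^ q)" for p q
  proof -
    have "hM N (t / A) \<le> N (p + q) * (t / A) ^ (p + q)" by (rule hM_le[OF pos tA])
    also have "\<dots> \<le> (A ^ (p + q) * N p * N q) * (t / A) ^ (p + q)"
      using mu[of p q] tA by (intro mult_right_mono) auto
    also have "\<dots> = (N p * t ^ p) * (N q * t ^ q)"
      using A by (simp add: power_divide power_add field_simps)
    finally show ?thesis .
  qed
  have 2: "hM N (t / A) \<le> (N p * t ^ p) * ?h" for p
  proof -
    have a: "N p * t ^ p > 0" using pos t by auto
    have "hM N (t / A) / (N p * t ^ p) \<le> ?h"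
      by (rule hM_ge[OF t]) (use 1 a in \<open>auto simp: divide_le_eq mult.commute\<close>)
    then show ?thesis using a by (simp add: divide_le_eq mult.commute)
  qed
  show ?thesis
  proof (cases "?h > 0")
    case True
    have "hM N (t / A) / ?h \<le> ?h"
      by (rule hM_ge[OF t]) (use 2 True in \<open>auto simp: divide_le_eq mult.commute\<close>)
    then show ?thesis using True by (simp add: divide_le_eq power2_eq_square)
  next
    case False
    then have "?h = 0" using hM_nonneg[OF pos, of t] by simp
    then show ?thesis using 2[of 0] by simp
  qed
qed

lemma hM_sq_iter:
  assumes pos: "\<forall>p. N p > 0" and N0: "N 0 = 1" and A: "A \<ge> 1" and mu: "\<And>p l. N (p + l) \<le> A ^ (p + l) * N p * N l"
    and t: "t > 0"
  shows "hM N (t / A ^ k) \<le> (hM N t) ^ (2 ^ k)"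
proof (induction k)
  case 0 then show ?case by simp
next
  case (Suc k)
  have tk: "t / A ^ k > 0" using t A by simp
  have "hM N (t / A ^ Suc k) = hM N ((t / A ^ k) / A)" by (simp add: field_simps)
  also have "\<dots> \<le> (hM N (t / A ^ k))\<^sup>2" using A by (intro hM_sq[OF pos _ mu tk]) auto
  also have "\<dots> \<le> ((hM N t) ^ (2 ^ k))\<^sup>2"
    using Suc.IH hM_nonneg[OF pos] by (intro power_mono) auto
  also have "\<dots> = (hM N t) ^ (2 ^ Suc k)" by (simp add: power_mult[symmetric] mult.commute)
  finally show ?case .
qed

lemma hM_powr_rel:
  assumes pos: "\<forall>p. M p > 0" and s: "s > 0" and y: "y > 0"
  shows "hM (\<lambda>p. M p powr s) y powr (1 / s) \<le> hM M (y powr (1 / s))"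
proof (rule hM_ge)
  show "0 < y powr (1 / s)" using y by simp
  fix p
  have pos': "\<forall>p. M p powr s > 0"
  proof
    fix p show "M p powr s > 0" using pos[rule_format, of p] by simp
  qed
  have "hM (\<lambda>p. M p powr s) y powr (1 / s) \<le> (M p powr s * y ^ p) powr (1 / s)"
    using hM_le[OF pos' y, of p] hM_nonneg[OF pos', of y] s by (intro powr_mono2) auto
  also have "\<dots> = M p * (y powr (1 / s)) ^ p"
  proof -
    have Mp: "M p > 0" using pos by simp
    have "(M p powr s * y ^ p) powr (1 / s) = (M p powr s) powr (1/s) * (y powr real p) powr (1 / s)"
      using Mp y by (simp add: powr_mult powr_realpow)
    also have "\<dots> = M p * (y powr (1 / s)) powr real p"
      using s Mp by (simp add: powr_powr mult.commute)
    also have "\<dots> = M p * (y powr (1 / s)) ^ p" using y by (simp add: powr_realpow)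
    finally show ?thesis .
  qed
  finally show "hM (\<lambda>p. M p powr s) y powr (1 / s) \<le> M p * (y powr (1 / s)) ^ p" .
qed

section \<open>Lower bound for hM from polynomial growth of quotients\<close>

lemma prod_quot:
  fixes N :: "nat \<Rightarrow> real"
  assumes pos: "\<forall>p. N p > 0" and N0: "N 0 = 1"
  shows "N p * t ^ p = (\<Prod>j<p. N (Suc j) / N j * t)"
proof (induction p)
  case 0 then show ?case using N0 by simp
next
  case (Suc p)
  have "N p \<noteq> 0" using pos[rule_format, of p] by simp
  then have "N (Suc p) * t ^ Suc p = (N p * t ^ p) * (N (Suc p) / N p * t)"
    by (simp add: field_simps)
  then show ?case using Suc.IH by simp
qed

lemma hM_lower:
  assumes pos: "\<forall>p. N p > 0" and N0: "N 0 = 1" and C: "C > 0" and G: "G > 0"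
    and q: "\<And>j. N (Suc j) / N j \<ge> C * (real j + 1) powr G"
    and t: "t > 0" and Ct: "C * t < 1"
  shows "hM N t \<ge> (C * t) ^ nat \<lceil>(C * t) powr (- 1 / G)\<rceil>"
proof (rule hM_ge[OF t])
  fix p
  define K where "K = nat \<lceil>(C * t) powr (- 1 / G)\<rceil>"
  have fac1: "N (Suc j) / N j * t \<ge> C * t" for j
  proof -
    have "C * t \<le> C * (real j + 1) powr G * t" using C t G
      by (simp add: ge_one_powr_ge_zero)
    also have "\<dots> \<le> N (Suc j) / N j * t" using q[of j] t by (intro mult_right_mono) auto
    finally show ?thesis .
  qed
  have qt: "C * t * (real j + 1) powr G \<le> N (Suc j) / N j * t" for j
    using mult_right_mono[OF q[of j], of t] t by (simp add: algebra_simps)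
  have fac2: "N (Suc j) / N j * t \<ge> 1" if "j \<ge> K" for j
  proof -
    have Ctp: "C * t > 0" using C t by simp
    have "(C * t) powr (- 1 / G) \<le> real K" unfolding K_def by linarith
    also have "\<dots> \<le> real j + 1" using that by simp
    finally have a: "(C * t) powr (- 1 / G) \<le> real j + 1" .
    have "((C * t) powr (- 1 / G)) powr G \<le> (real j + 1) powr G"
      using a G by (intro powr_mono2) auto
    also have "((C * t) powr (- 1 / G)) powr G = 1 / (C * t)"
      using G Ctp by (subst powr_powr) (simp add: powr_minus_divide)
    finally have "1 / (C * t) \<le> (real j + 1) powr G" .
    then have "1 \<le> C * t * (real j + 1) powr G" using Ctp by (simp add: divide_le_eq mult.commute)
    also have "\<dots> \<le> N (Suc j) / N j * t" by (rule qt)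
    finally show ?thesis .
  qed
  have ind: "(\<Prod>j<n. N (Suc j) / N j * t) \<ge> (C * t) ^ min n K" for n
  proof (induction n)
    case 0 then show ?case by simp
  next
    case (Suc n)
    have nn: "(C * t) ^ min n K \<ge> 0" using C t by simp
    have pr: "0 \<le> (\<Prod>j<n. N (Suc j) / N j * t)"
      by (rule prod_nonneg) (use pos t in \<open>auto intro!: mult_nonneg_nonneg divide_nonneg_nonneg less_imp_le\<close>)
    have ct: "0 \<le> C * t" using C t by simp
    show ?case
    proof (cases "n < K")
      case True
      then have "min (Suc n) K = Suc (min n K)" by simp
      then have "(C * t) ^ min (Suc n) K = (C * t) ^ min n K * (C * t)" by simp
      also have "\<dots> \<le> (\<Prod>j<n. N (Suc j) / N j * t) * (N (Suc n) / N n * t)"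
        by (rule mult_mono[OF Suc.IH fac1[of n] pr ct])
      finally show ?thesis by simp
    next
      case False
      then have "min (Suc n) K = min n K" by simp
      then have "(C * t) ^ min (Suc n) K = (C * t) ^ min n K * 1" by simp
      also have "\<dots> \<le> (\<Prod>j<n. N (Suc j) / N j * t) * (N (Suc n) / N n * t)"
        by (rule mult_mono[OF Suc.IH fac2[of n] pr]) (use False in auto)
      finally show ?thesis by simp
    qed
  qed
  have "(C * t) ^ K \<le> (C * t) ^ min p K"
    using C t Ct by (intro power_decreasing) auto
  also have "\<dots> \<le> N p * t ^ p" using ind[of p] prod_quot[OF pos N0, of p t] by simp
  finally show "(C * t) ^ nat \<lceil>(C * t) powr (- 1 / G)\<rceil> \<le> N p * t ^ p" unfolding K_def .
qed

lemma hM_one: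
  assumes pos: "\<forall>p. N p > 0" and N0: "N 0 = 1" and C: "C > 0" and G: "G > 0"
    and q: "\<And>j. N (Suc j) / N j \<ge> C * (real j + 1) powr G"
    and t: "C * t \<ge> 1"
  shows "hM N t = 1"
proof -
  have t0: "t > 0" using C t by (metis mult_le_0_iff not_less zero_less_one order_trans_rules(21) less_le_not_le)
  have "1 \<le> hM N t"
  proof (rule hM_ge[OF t0])
    fix p
    have "(\<Prod>j<p. (1::real)) \<le> (\<Prod>j<p. N (Suc j) / N j * t)"
    proof (rule prod_mono)
      fix j assume "j \<in> {..<p}"
      have "1 \<le> C * t * 1" using t by simp
      also have "\<dots> \<le> C * t * (real j + 1) powr G" using C t0 G by (intro mult_left_mono) (auto simp: ge_one_powr_ge_zero)
      also have "\<dots> \<le> N (Suc j) / N j * t" using mult_right_mono[OF q[of j], of t] t0 by (simp add: algebra_simps)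
      finally show "0 \<le> (1::real) \<and> 1 \<le> N (Suc j) / N j * t" by simp
    qed
    then show "1 \<le> N p * t ^ p" using prod_quot[OF pos N0, of p t] by simp
  qed
  then show ?thesis using hM_le1[OF pos N0 t0] by simp
qed



lemma sr_basic:
  assumes "strongly_regular M"
  shows "M 0 = 1" "\<forall>p. M p > 0" "\<And>p. M (Suc p) ^ 2 \<le> M p * M (Suc (Suc p))"
    "\<exists>A\<ge>1. \<forall>p l. M (p + l) \<le> A ^ (p + l) * M p * M l"
proof -
  show "M 0 = 1" "\<forall>p. M p > 0" using assms unfolding strongly_regular_def by auto
  show "\<And>p. M (Suc p) ^ 2 \<le> M p * M (Suc (Suc p))"
  proof -
    fix p
    have "\<forall>p\<ge>1. (M p)\<^sup>2 \<le> M (p - 1) * M (p + 1)" using assms unfolding strongly_regular_def by blast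
    from this[rule_format, of "Suc p"] show "M (Suc p) ^ 2 \<le> M p * M (Suc (Suc p))" by simp
  qed
  obtain A where A: "A > 0" "\<forall>p l. M (p + l) \<le> A ^ (p + l) * M p * M l"
    using assms unfolding strongly_regular_def by blast
  have pos: "\<forall>p. M p > 0" using assms unfolding strongly_regular_def by auto
  show "\<exists>A\<ge>1. \<forall>p l. M (p + l) \<le> A ^ (p + l) * M p * M l"
  proof (intro exI[of _ "max A 1"] conjI allI)
    fix p l
    have "M (p + l) \<le> A ^ (p + l) * M p * M l" using A by blast
    also have "\<dots> \<le> (max A 1) ^ (p + l) * M p * M l"
      using pos A by (intro mult_right_mono power_mono) (auto intro: less_imp_le)
    finally show "M (p + l) \<le> (max A 1) ^ (p + l) * M p * M l" .
  qed simp
qed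

lemma quot_mono:
  assumes "strongly_regular M" shows "mono (quot_seq M)"
proof (rule incseq_SucI)
  fix p
  have pos: "\<forall>p. M p > 0" and l: "M (Suc p) ^ 2 \<le> M p * M (Suc (Suc p))" using sr_basic[OF assms] by auto
  have a: "M p > 0" "M (Suc p) > 0" using pos by auto
  have "M (Suc p) / M p \<le> M (Suc (Suc p)) / M (Suc p)"
    using l a by (simp add: divide_le_eq le_divide_eq power2_eq_square mult.commute)
  then show "quot_seq M p \<le> quot_seq M (Suc p)" by (simp add: quot_seq_def)
qed

lemma gamma_extract:
  assumes sr: "strongly_regular M" and s: "s > 0" and sg: "1 < s * gammaM M"
  shows "\<exists>C G. C > 0 \<and> G > 1 \<and> (\<forall>j. M (Suc j) powr s / M j powr s \<ge> C * (real j + 1) powr G)"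
proof -
  have pos: "\<forall>p. M p > 0" and M0: "M 0 = 1" using sr_basic[OF sr] by auto
  let ?X = "{g. P_gamma g M}"
  have ne: "0 \<in> ?X"
    unfolding P_gamma_def using quot_mono[OF sr]
    by (intro CollectI exI[of _ "quot_seq M"] exI[of _ 1]) (auto simp: add_nonneg_eq_0_iff)
  have "\<exists>g\<in>?X. 1 / s < g"
  proof (cases "bdd_above ?X")
    case True
    have "1 / s < gammaM M" using sg s by (simp add: divide_less_eq mult.commute)
    then show ?thesis using less_cSup_iff[of ?X "1/s"] ne True unfolding gammaM_def by blast
  next
    case False
    then show ?thesis unfolding bdd_above_def by (meson not_le_imp_less)
  qed
  then obtain g where Pg: "P_gamma g M" and g: "1 / s < g" by blast
  obtain m' a where a: "a \<ge> 1" and ma: "\<And>p. quot_seq M p / a \<le> m' p \<and> m' p \<le> a * quot_seq M p"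
    and mono: "mono (\<lambda>p. m' p / (real p + 1) powr g)"
    using Pg unfolding P_gamma_def by blast
  have q0: "quot_seq M 0 = M 1" using M0 by (simp add: quot_seq_def)
  have M1: "M 1 > 0" using pos by simp
  define C0 where "C0 = M 1 / a ^ 2"
  have C0: "C0 > 0" using a M1 by (simp add: C0_def)
  have low: "quot_seq M j \<ge> C0 * (real j + 1) powr g" for j
  proof -
    have "m' 0 / (real 0 + 1) powr g \<le> m' j / (real j + 1) powr g" using monoD[OF mono, of 0 j] by simp
    then have "m' 0 \<le> m' j / (real j + 1) powr g" by simp
    then have 1: "m' 0 * (real j + 1) powr g \<le> m' j" by (simp add: le_divide_eq)
    have 2: "M 1 / a \<le> m' 0" using ma[of 0] q0 by simp
    have "C0 * (real j + 1) powr g = (M 1 / a) * (real j + 1) powr g / a"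
      by (simp add: C0_def power2_eq_square)
    also have "\<dots> \<le> m' 0 * (real j + 1) powr g / a"
      using 2 a by (intro divide_right_mono mult_right_mono) auto
    also have "\<dots> \<le> m' j / a" using 1 a by (intro divide_right_mono) auto
    also have "\<dots> \<le> quot_seq M j" using ma[of j] a by (simp add: divide_le_eq mult.commute)
    finally show ?thesis .
  qed
  show ?thesis
  proof (intro exI conjI allI)
    show "C0 powr s > 0" using C0 by simp
    show "g * s > 1" using g s by (simp add: divide_less_eq mult.commute)
    fix j
    have "C0 powr s * (real j + 1) powr (g * s) = (C0 * (real j + 1) powr g) powr s"
      using C0 by (simp add: powr_mult powr_powr)
    also have "\<dots> \<le> (quot_seq M j) powr s"
      using low[of j] C0 s by (intro powr_mono2) auto
    also have "\<dots> = M (Suc j) powr s / M j powr s"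
      using pos by (simp add: quot_seq_def powr_divide less_imp_le)
    finally show "C0 powr s * (real j + 1) powr (g * s) \<le> M (Suc j) powr s / M j powr s" .
  qed
qed



lemma integrable_abs_powr:
  assumes b: "\<beta> < 1" and c: "c \<ge> 0"
  shows "integrable lborel (\<lambda>t::real. indicator {-c..c} t * \<bar>t\<bar> powr (- \<beta>))"
proof -
  define g where "g t = indicator {0..c} t * t powr (- \<beta>)" for t :: real
  have "(\<lambda>t. t powr (- \<beta>)) integrable_on {0..c}"
    by (rule integrable_on_powr_from_0) (use b c in auto)
  then have "(\<lambda>t. t powr (- \<beta>)) absolutely_integrable_on {0..c}"
    by (subst absolutely_integrable_on_iff_nonneg) auto
  then have "integrable lebesgue (\<lambda>t. indicator {0..c} t *\<^sub>R t powr (- \<beta>))"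
    unfolding set_integrable_def .
  then have gi: "integrable lborel g"
    unfolding g_def by (subst (asm) integrable_completion) auto
  have gi2: "integrable lborel (\<lambda>t. g (0 + (-1) * t))"
    by (rule lborel_integrable_real_affine[OF gi]) simp
  have eq: "indicator {-c..c} t * \<bar>t\<bar> powr (- \<beta>) = g t + g (0 + (-1) * t)" for t :: real
    unfolding g_def by (cases "t = 0"; cases "t > 0") (auto simp: indicator_def)
  show ?thesis unfolding eq using gi gi2 by (rule Bochner_Integration.integrable_add)
qed

lemma phi_facts:
  fixes N :: "nat \<Rightarrow> real"
  assumes pos: "\<forall>p. N p > 0" and N0: "N 0 = 1" and C: "C > 0" and G: "G > 1"
    and q: "\<And>j. N (Suc j) / N j \<ge> C * (real j + 1) powr G"
  shows phi_pos: "\<And>t. t > 0 \<Longrightarrow> hM N t > 0"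
    and phi_le0: "\<And>t. ln (hM N \<bar>t\<bar>) \<le> 0"
    and phi_zero: "\<And>t. C * \<bar>t\<bar> \<ge> 1 \<Longrightarrow> ln (hM N \<bar>t\<bar>) = 0"
    and phi_int: "integrable lborel (\<lambda>t. ln (hM N \<bar>t\<bar>))"
proof -
  have G0: "G > 0" using G by simp
  have hpos1: "hM N t > 0" if "t > 0" "C * t < 1" for t
  proof -
    have "0 < (C * t) ^ nat \<lceil>(C * t) powr (- 1 / G)\<rceil>" using C that by simp
    also have "\<dots> \<le> hM N t" by (rule hM_lower[OF pos N0 C G0 q that])
    finally show ?thesis .
  qed
  show hpos: "hM N t > 0" if t: "t > 0" for t
  proof (cases "C * t < 1")
    case True then show ?thesis using hpos1 t by blast
  next
    case False then show ?thesis using hM_one[OF pos N0 C G0 q] by simp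
  qed
  show le0: "ln (hM N \<bar>t\<bar>) \<le> 0" for t
  proof (cases "t = 0")
    case True then show ?thesis by (simp add: hM_def)
  next
    case False
    then show ?thesis using hpos[of "\<bar>t\<bar>"] hM_le1[OF pos N0, of "\<bar>t\<bar>"] by simp
  qed
  show z: "ln (hM N \<bar>t\<bar>) = 0" if "C * \<bar>t\<bar> \<ge> 1" for t
    using hM_one[OF pos N0 C G0 q that] by simp
  define \<epsilon> where "\<epsilon> = (1 - 1 / G) / 2"
  define \<beta> where "\<beta> = 1 / G + \<epsilon>"
  have \<epsilon>: "\<epsilon> > 0" using G by (simp add: \<epsilon>_def)
  have \<beta>: "\<beta> < 1" using G by (simp add: \<beta>_def \<epsilon>_def field_simps)
  define B where "B = 2 / \<epsilon> * C powr (- \<beta>)"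
  have bound: "norm (ln (hM N \<bar>t\<bar>)) \<le> B * (indicator {-(1/C)..1/C} t * \<bar>t\<bar> powr (- \<beta>))" for t
  proof (cases "t = 0 \<or> C * \<bar>t\<bar> \<ge> 1")
    case True
    then show ?thesis
    proof
      assume "t = 0" then show ?thesis by (simp add: hM_def)
    next
      assume "C * \<bar>t\<bar> \<ge> 1"
      then have "ln (hM N \<bar>t\<bar>) = 0" by (rule z)
      moreover have "B \<ge> 0" using \<epsilon> by (simp add: B_def)
      ultimately show ?thesis by (simp add: indicator_def)
    qed
  next
    case False
    define x where "x = C * \<bar>t\<bar>"
    define y where "y = 1 / x"
    have t0: "\<bar>t\<bar> > 0" using False by simp
    have x: "0 < x" "x < 1" using False C by (auto simp: x_def)
    have y: "y > 1" using x by (simp add: y_def)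
    define K where "K = nat \<lceil>x powr (- 1 / G)\<rceil>"
    have low: "x ^ K \<le> hM N \<bar>t\<bar>" unfolding K_def x_def
      by (rule hM_lower[OF pos N0 C G0 q]) (use t0 x in \<open>auto simp: x_def\<close>)
    have hp: "hM N \<bar>t\<bar> > 0" using hpos t0 by simp
    have "ln (x ^ K) \<le> ln (hM N \<bar>t\<bar>)" using low x hp by simp
    then have l1: "- ln (hM N \<bar>t\<bar>) \<le> real K * ln y"
      using x by (simp add: y_def ln_realpow ln_div)
    have xy: "x powr (- 1 / G) = y powr (1 / G)"
      using x by (simp add: y_def powr_divide powr_minus_divide)
    have y1: "y powr (1 / G) \<ge> 1" using y G by (simp add: ge_one_powr_ge_zero)
    have "real K = of_int \<lceil>y powr (1 / G)\<rceil>" unfolding K_def xy using y1 by (intro of_nat_nat) auto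
    also have "\<dots> \<le> y powr (1 / G) + 1" by (rule of_int_ceiling_le_add_one)
    also have "\<dots> \<le> 2 * y powr (1 / G)" using y1 by simp
    finally have K: "real K \<le> 2 * y powr (1 / G)" .
    have ly: "ln y \<le> y powr \<epsilon> / \<epsilon>" using y \<epsilon> by (intro ln_powr_bound) auto
    have lyn: "ln y \<ge> 0" using y by simp
    have "norm (ln (hM N \<bar>t\<bar>)) = - ln (hM N \<bar>t\<bar>)" using le0[of t] by simp
    also have "\<dots> \<le> real K * ln y" by (rule l1)
    also have "\<dots> \<le> (2 * y powr (1 / G)) * (y powr \<epsilon> / \<epsilon>)"
      using K ly lyn by (intro mult_mono) auto
    also have "\<dots> = 2 / \<epsilon> * y powr \<beta>" by (simp add: \<beta>_def powr_add)
    also have "y powr \<beta> = C powr (- \<beta>) * \<bar>t\<bar> powr (- \<beta>)"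
      using C t0 by (simp add: y_def x_def powr_divide powr_minus_divide powr_mult)
    finally have "norm (ln (hM N \<bar>t\<bar>)) \<le> B * \<bar>t\<bar> powr (- \<beta>)" by (simp add: B_def mult.assoc)
    moreover have "t \<in> {-(1/C)..1/C}"
    proof -
      have "\<bar>t\<bar> \<le> 1 / C" using False C by (simp add: le_divide_eq mult.commute)
      then show ?thesis by (auto simp: abs_le_iff)
    qed
    ultimately show ?thesis by simp
  qed
  have hmeas: "hM N \<in> borel_measurable borel" by (rule borel_measurable_mono[OF hM_mono'[OF pos]])
  show "integrable lborel (\<lambda>t. ln (hM N \<bar>t\<bar>))"
  proof (rule Bochner_Integration.integrable_bound)
    show "integrable lborel (\<lambda>t. B * (indicator {-(1/C)..1/C} t * \<bar>t\<bar> powr (- \<beta>)))"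
      using integrable_abs_powr[OF \<beta>, of "1/C"] C by simp
    show "(\<lambda>t. ln (hM N \<bar>t\<bar>)) \<in> borel_measurable lborel" using hmeas by measurable
    show "AE t in lborel. norm (ln (hM N \<bar>t\<bar>)) \<le> norm (B * (indicator {-(1/C)..1/C} t * \<bar>t\<bar> powr (- \<beta>)))"
      using bound by (intro AE_I2) (smt (verit) norm_ge_zero real_norm_def)
  qed
qed



definition Jf :: "(real \<Rightarrow> real) \<Rightarrow> complex \<Rightarrow> complex" where
  "Jf \<phi> \<Xi> = (LINT t|lborel. complex_of_real (\<phi> t) * ((\<i> * t * \<Xi> - 1) / (\<i> * t - \<Xi>)) / complex_of_real (1 + t\<^sup>2))"

lemma one_sq_nz: "1 + (x::real)\<^sup>2 \<noteq> 0"
  by (smt (verit) zero_le_power2)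

lemma K_nz: "Re \<Xi> > 0 \<Longrightarrow> \<i> * complex_of_real t - \<Xi> \<noteq> 0"
proof
  assume "Re \<Xi> > 0" "\<i> * complex_of_real t - \<Xi> = 0"
  then have "Re (\<i> * complex_of_real t - \<Xi>) = 0" by simp
  then show False using \<open>Re \<Xi> > 0\<close> by simp
qed

lemma K_split:
  assumes "Re \<Xi> > 0"
  shows "(\<i> * t * \<Xi> - 1) / (\<i> * t - \<Xi>) = - \<i> * t + complex_of_real (1 + t\<^sup>2) / (\<Xi> - \<i> * t)"
proof -
  have nz: "\<i> * complex_of_real t - \<Xi> \<noteq> 0" by (rule K_nz[OF assms])
  then have nz2: "\<Xi> - \<i> * complex_of_real t \<noteq> 0" by (metis right_minus_eq)
  show ?thesis using nz nz2
    by (simp add: field_simps power2_eq_square)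
qed

lemma K_bound:
  assumes "Re \<Xi> > 0"
  shows "norm ((\<i> * t * \<Xi> - 1) / (\<i> * t - \<Xi>) / complex_of_real (1 + t\<^sup>2)) \<le> 1 + 1 / Re \<Xi>"
proof -
  have p: "1 + t\<^sup>2 > 0" by (simp add: add_pos_nonneg)
  have d: "norm (\<Xi> - \<i> * t) \<ge> Re \<Xi>"
    using complex_Re_le_cmod[of "\<Xi> - \<i> * t"] by simp
  have "(\<i> * t * \<Xi> - 1) / (\<i> * t - \<Xi>) / complex_of_real (1 + t\<^sup>2)
        = - \<i> * t / complex_of_real (1 + t\<^sup>2) + 1 / (\<Xi> - \<i> * t)"
  proof -
    have nz2: "\<Xi> - \<i> * complex_of_real t \<noteq> 0" using K_nz[OF assms, of t] by (metis right_minus_eq)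
    have nz3: "1 + (complex_of_real t)\<^sup>2 \<noteq> 0" using one_sq_nz[of t]
      by (metis of_real_1 of_real_add of_real_eq_0_iff of_real_power)
    have gen: "\<And>a b c::complex. b \<noteq> 0 \<Longrightarrow> (a + b / c) / b = a / b + 1 / c"
      by (simp add: add_divide_distrib)
    have b: "complex_of_real (1 + t\<^sup>2) \<noteq> 0" using one_sq_nz[of t] of_real_eq_0_iff by blast
    show ?thesis unfolding K_split[OF assms, of t] by (rule gen[OF b])
  qed
  also have "norm \<dots> \<le> norm (- \<i> * t / complex_of_real (1 + t\<^sup>2)) + norm (1 / (\<Xi> - \<i> * t))"
    by (rule norm_triangle_ineq)
  also have "norm (- \<i> * t / complex_of_real (1 + t\<^sup>2)) = \<bar>t\<bar> / (1 + t\<^sup>2)"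
  proof -
    have "norm (- \<i> * t / complex_of_real (1 + t\<^sup>2)) = norm (- \<i> * complex_of_real t) / norm (complex_of_real (1 + t\<^sup>2))"
      by (rule norm_divide)
    also have "\<dots> = \<bar>t\<bar> / \<bar>1 + t\<^sup>2\<bar>" unfolding norm_of_real by (simp add: norm_mult)
    finally show ?thesis using p by simp
  qed
  also have "\<dots> \<le> 1"
  proof -
    have "\<bar>t\<bar> \<le> 1 + t\<^sup>2"
    proof -
      have "0 \<le> (\<bar>t\<bar> - 1/2)\<^sup>2" by simp
      then have "\<bar>t\<bar> \<le> \<bar>t\<bar>\<^sup>2 + 1/4" by (simp add: power2_eq_square algebra_simps)
      then show ?thesis by simp
    qed
    then show ?thesis using p by simp
  qed
  also have "norm (1 / (\<Xi> - \<i> * t)) \<le> 1 / Re \<Xi>"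
    using d assms by (simp add: norm_divide frac_le)
  finally show ?thesis by simp
qed

lemma J_holo:
  assumes phi: "integrable lborel \<phi>"
  shows "Jf \<phi> holomorphic_on {\<Xi>. Re \<Xi> > 0}"
  unfolding Jf_def
proof (rule holo_param_integral)
  show "open {\<Xi>. Re \<Xi> > 0}" by (simp add: open_halfspace_Re_gt)
  have pm: "\<phi> \<in> borel_measurable lborel" using phi by (rule borel_measurable_integrable)
  fix \<Xi> assume \<Xi>: "\<Xi> \<in> {\<Xi>. Re \<Xi> > 0}"
  have c: "continuous_on UNIV (\<lambda>t::real. ((\<i> * t * \<Xi> - 1) / (\<i> * t - \<Xi>)) / complex_of_real (1 + t\<^sup>2))"
    using K_nz \<Xi> one_sq_nz by (auto intro!: continuous_intros simp: complex_eq_iff)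
  have "(\<lambda>t::real. ((\<i> * t * \<Xi> - 1) / (\<i> * t - \<Xi>)) / complex_of_real (1 + t\<^sup>2)) \<in> borel_measurable borel"
    using c by (rule borel_measurable_continuous_onI)
  then have m2: "(\<lambda>t::real. ((\<i> * t * \<Xi> - 1) / (\<i> * t - \<Xi>)) / complex_of_real (1 + t\<^sup>2)) \<in> borel_measurable lborel"
    by simp
  have "(\<lambda>t. complex_of_real (\<phi> t) * (((\<i> * t * \<Xi> - 1) / (\<i> * t - \<Xi>)) / complex_of_real (1 + t\<^sup>2))) \<in> borel_measurable lborel"
    using pm m2 by measurable
  then show "(\<lambda>t. complex_of_real (\<phi> t) * ((\<i> * t * \<Xi> - 1) / (\<i> * t - \<Xi>)) / complex_of_real (1 + t\<^sup>2)) \<in> borel_measurable lborel"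
    by (simp add: times_divide_eq_right)
next
  fix t :: real
  show "(\<lambda>\<Xi>. complex_of_real (\<phi> t) * ((\<i> * t * \<Xi> - 1) / (\<i> * t - \<Xi>)) / complex_of_real (1 + t\<^sup>2)) holomorphic_on {\<Xi>. Re \<Xi> > 0}"
    using K_nz by (auto intro!: holomorphic_intros)
next
  fix \<Xi>0 assume \<Xi>0: "\<Xi>0 \<in> {\<Xi>. Re \<Xi> > 0}"
  define r where "r = Re \<Xi>0 / 2"
  have r: "r > 0" using \<Xi>0 by (simp add: r_def)
  have sub: "Re \<Xi> \<ge> r" if "\<Xi> \<in> cball \<Xi>0 r" for \<Xi>
  proof -
    have "\<bar>Re \<Xi> - Re \<Xi>0\<bar> \<le> norm (\<Xi> - \<Xi>0)" using abs_Re_le_cmod[of "\<Xi> - \<Xi>0"] by simp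
    also have "\<dots> \<le> r" using that by (simp add: dist_norm norm_minus_commute)
    finally show ?thesis unfolding r_def by linarith
  qed
  show "\<exists>r>0. \<exists>g. cball \<Xi>0 r \<subseteq> {\<Xi>. Re \<Xi> > 0} \<and> integrable lborel g \<and>
          (\<forall>w\<in>cball \<Xi>0 r. \<forall>t. norm (complex_of_real (\<phi> t) * ((\<i> * t * w - 1) / (\<i> * t - w)) / complex_of_real (1 + t\<^sup>2)) \<le> g t)"
  proof (intro exI conjI ballI allI)
    show "r > 0" by (rule r)
    show "cball \<Xi>0 r \<subseteq> {\<Xi>. Re \<Xi> > 0}" using sub r by force
    show "integrable lborel (\<lambda>t. norm (\<phi> t) * (1 + 1 / r))" using phi by simp
    fix w t assume w: "w \<in> cball \<Xi>0 r"
    have wr: "Re w \<ge> r" using sub w by blast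
    have "norm (complex_of_real (\<phi> t) * ((\<i> * t * w - 1) / (\<i> * t - w)) / complex_of_real (1 + t\<^sup>2))
        = norm (\<phi> t) * norm ((\<i> * t * w - 1) / (\<i> * t - w) / complex_of_real (1 + t\<^sup>2))"
      by (simp add: norm_mult norm_divide)
    also have "\<dots> \<le> norm (\<phi> t) * (1 + 1 / Re w)"
      using K_bound[of w t] wr r by (intro mult_left_mono) auto
    also have "\<dots> \<le> norm (\<phi> t) * (1 + 1 / r)"
      using wr r by (intro mult_left_mono) (auto simp: frac_le)
    finally show "norm (complex_of_real (\<phi> t) * ((\<i> * t * w - 1) / (\<i> * t - w)) / complex_of_real (1 + t\<^sup>2)) \<le> norm (\<phi> t) * (1 + 1 / r)" .
  qed
qed



lemma k_eq:
  assumes "Re \<Xi> > 0"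
  shows "complex_of_real (\<phi> t) * ((\<i> * t * \<Xi> - 1) / (\<i> * t - \<Xi>)) / complex_of_real (1 + t\<^sup>2)
       = complex_of_real (\<phi> t) * (- \<i> * t / complex_of_real (1 + t\<^sup>2) + 1 / (\<Xi> - \<i> * t))"
proof -
  have gen: "\<And>a b c::complex. b \<noteq> 0 \<Longrightarrow> (a + b / c) / b = a / b + 1 / c"
    by (simp add: add_divide_distrib)
  have b: "complex_of_real (1 + t\<^sup>2) \<noteq> 0" using one_sq_nz[of t] of_real_eq_0_iff by blast
  have "((\<i> * t * \<Xi> - 1) / (\<i> * t - \<Xi>)) / complex_of_real (1 + t\<^sup>2) = (- \<i> * t / complex_of_real (1 + t\<^sup>2) + 1 / (\<Xi> - \<i> * t))"
    unfolding K_split[OF assms, of t] by (rule gen[OF b])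
  then show ?thesis by (simp only: times_divide_eq_right[symmetric] mult.assoc)
qed

lemma Re_k:
  assumes "Re \<Xi> > 0"
  shows "Re (complex_of_real (\<phi> t) * ((\<i> * t * \<Xi> - 1) / (\<i> * t - \<Xi>)) / complex_of_real (1 + t\<^sup>2))
       = \<phi> t * (Re \<Xi> / ((Re \<Xi>)\<^sup>2 + (t - Im \<Xi>)\<^sup>2))"
proof -
  have "Re (1 / (\<Xi> - \<i> * t)) = Re \<Xi> / ((Re \<Xi>)\<^sup>2 + (t - Im \<Xi>)\<^sup>2)"
    by (simp add: Re_divide power2_eq_square algebra_simps)
  moreover have "Re (- \<i> * t / complex_of_real (1 + t\<^sup>2)) = 0"
    by (simp del: of_real_add of_real_power)
  ultimately show ?thesis unfolding k_eq[OF assms] by (simp del: of_real_add of_real_power)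
qed

lemma k_integrable:
  assumes phi: "integrable lborel \<phi>" and \<Xi>: "Re \<Xi> > 0"
  shows "integrable lborel (\<lambda>t. complex_of_real (\<phi> t) * ((\<i> * t * \<Xi> - 1) / (\<i> * t - \<Xi>)) / complex_of_real (1 + t\<^sup>2))"
proof (rule Bochner_Integration.integrable_bound[of _ "\<lambda>t. norm (\<phi> t) * (1 + 1 / Re \<Xi>)"])
  show "integrable lborel (\<lambda>t. norm (\<phi> t) * (1 + 1 / Re \<Xi>))" using phi by simp
  have pm: "\<phi> \<in> borel_measurable lborel" using phi by (rule borel_measurable_integrable)
  have c: "continuous_on UNIV (\<lambda>t::real. ((\<i> * t * \<Xi> - 1) / (\<i> * t - \<Xi>)) / complex_of_real (1 + t\<^sup>2))"
    using K_nz \<Xi> one_sq_nz by (auto intro!: continuous_intros simp: complex_eq_iff)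
  have "(\<lambda>t::real. ((\<i> * t * \<Xi> - 1) / (\<i> * t - \<Xi>)) / complex_of_real (1 + t\<^sup>2)) \<in> borel_measurable borel"
    using c by (rule borel_measurable_continuous_onI)
  then have m2: "(\<lambda>t::real. ((\<i> * t * \<Xi> - 1) / (\<i> * t - \<Xi>)) / complex_of_real (1 + t\<^sup>2)) \<in> borel_measurable lborel"
    by simp
  have "(\<lambda>t. complex_of_real (\<phi> t) * (((\<i> * t * \<Xi> - 1) / (\<i> * t - \<Xi>)) / complex_of_real (1 + t\<^sup>2))) \<in> borel_measurable lborel"
    using pm m2 by measurable
  then show "(\<lambda>t. complex_of_real (\<phi> t) * ((\<i> * t * \<Xi> - 1) / (\<i> * t - \<Xi>)) / complex_of_real (1 + t\<^sup>2)) \<in> borel_measurable lborel"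
    by (simp add: times_divide_eq_right)
  show "AE t in lborel. norm (complex_of_real (\<phi> t) * ((\<i> * t * \<Xi> - 1) / (\<i> * t - \<Xi>)) / complex_of_real (1 + t\<^sup>2))
      \<le> norm (norm (\<phi> t) * (1 + 1 / Re \<Xi>))"
  proof (intro AE_I2)
    fix t
    have "norm (complex_of_real (\<phi> t) * ((\<i> * t * \<Xi> - 1) / (\<i> * t - \<Xi>)) / complex_of_real (1 + t\<^sup>2))
        = norm (\<phi> t) * norm ((\<i> * t * \<Xi> - 1) / (\<i> * t - \<Xi>) / complex_of_real (1 + t\<^sup>2))"
      by (simp add: norm_mult norm_divide)
    also have "\<dots> \<le> norm (\<phi> t) * (1 + 1 / Re \<Xi>)"
      using K_bound[OF \<Xi>, of t] by (intro mult_left_mono) auto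
    finally show "norm (complex_of_real (\<phi> t) * ((\<i> * t * \<Xi> - 1) / (\<i> * t - \<Xi>)) / complex_of_real (1 + t\<^sup>2))
      \<le> norm (norm (\<phi> t) * (1 + 1 / Re \<Xi>))" unfolding real_norm_def[of "norm (\<phi> t) * (1 + 1 / Re \<Xi>)"]
      by (rule order_trans[OF _ abs_ge_self])
  qed
qed

lemma J_Re:
  assumes phi: "integrable lborel \<phi>" and \<Xi>: "Re \<Xi> > 0"
  shows "Re (Jf \<phi> \<Xi>) = (LBINT t. \<phi> t * (Re \<Xi> / ((Re \<Xi>)\<^sup>2 + (t - Im \<Xi>)\<^sup>2)))"
proof -
  have "Re (Jf \<phi> \<Xi>) = (LBINT t. Re (complex_of_real (\<phi> t) * ((\<i> * t * \<Xi> - 1) / (\<i> * t - \<Xi>)) / complex_of_real (1 + t\<^sup>2)))"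
    unfolding Jf_def using integral_bounded_linear[OF bounded_linear_Re k_integrable[OF phi \<Xi>]] by simp
  also have "\<dots> = (LBINT t. \<phi> t * (Re \<Xi> / ((Re \<Xi>)\<^sup>2 + (t - Im \<Xi>)\<^sup>2)))"
    using Re_k[OF \<Xi>] by simp
  finally show ?thesis .
qed

lemma J_Re_bound:
  fixes hN :: "real \<Rightarrow> real"
  assumes phi: "integrable lborel (\<lambda>t. ln (hN \<bar>t\<bar>))" and \<Xi>: "Re \<Xi> > 0"
    and hmono: "mono hN" and hpos: "\<And>t. t > 0 \<Longrightarrow> hN t > 0" and h1: "\<And>t. t > 0 \<Longrightarrow> hN t \<le> 1" and h0: "hN 0 = 0"
  shows "Re (Jf (\<lambda>t. ln (hN \<bar>t\<bar>)) \<Xi>) \<le> ln (hN (\<bar>Im \<Xi>\<bar> + Re \<Xi>))"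
    and "Re (Jf (\<lambda>t. ln (hN \<bar>t\<bar>)) \<Xi>) \<le> 0"
proof -
  define X where "X = Re \<Xi>"
  define Y where "Y = Im \<Xi>"
  define c where "c = ln (hN (\<bar>Y\<bar> + X))"
  have X: "X > 0" using \<Xi> by (simp add: X_def)
  have c0: "c \<le> 0" using hpos[of "\<bar>Y\<bar> + X"] h1[of "\<bar>Y\<bar> + X"] X by (simp add: c_def)
  define P where "P t = X / (X\<^sup>2 + (t - Y)\<^sup>2)" for t
  have Ppos: "P t > 0" for t using X by (simp add: P_def add_pos_nonneg)
  have Ple: "P t \<le> 1 / X" for t
  proof -
    have "P t \<le> X / X\<^sup>2" unfolding P_def
      by (rule frac_le[of X X "X\<^sup>2" "X\<^sup>2 + (t - Y)\<^sup>2"]) (use X in simp_all)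
    then show ?thesis using X by (simp add: power2_eq_square)
  qed
  have phi0: "ln (hN \<bar>t\<bar>) \<le> 0" for t
  proof (cases "t = 0")
    case True
    then show ?thesis using h0 by simp
  next
    case False then show ?thesis using hpos[of "\<bar>t\<bar>"] h1[of "\<bar>t\<bar>"] by simp
  qed
  have eq: "Re (Jf (\<lambda>t. ln (hN \<bar>t\<bar>)) \<Xi>) = (LBINT t. ln (hN \<bar>t\<bar>) * P t)"
    unfolding J_Re[OF phi \<Xi>] P_def X_def Y_def ..
  have i1: "integrable lborel (\<lambda>t. ln (hN \<bar>t\<bar>) * P t)"
  proof (rule Bochner_Integration.integrable_bound[of _ "\<lambda>t. ln (hN \<bar>t\<bar>) * (1 / X)"])
    show "integrable lborel (\<lambda>t. ln (hN \<bar>t\<bar>) * (1 / X))" using phi by simp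
    have "P \<in> borel_measurable borel" unfolding P_def by (intro borel_measurable_continuous_onI continuous_intros) (use X in \<open>auto simp: add_pos_nonneg\<close>)
    then show "(\<lambda>t. ln (hN \<bar>t\<bar>) * P t) \<in> borel_measurable lborel"
      using borel_measurable_integrable[OF phi] by measurable
    show "AE t in lborel. norm (ln (hN \<bar>t\<bar>) * P t) \<le> norm (ln (hN \<bar>t\<bar>) * (1 / X))"
    proof (intro AE_I2)
      fix t
      have "\<bar>ln (hN \<bar>t\<bar>)\<bar> * \<bar>P t\<bar> \<le> \<bar>ln (hN \<bar>t\<bar>)\<bar> * \<bar>1 / X\<bar>"
        using Ple[of t] Ppos[of t] X by (intro mult_left_mono) auto
      then show "norm (ln (hN \<bar>t\<bar>) * P t) \<le> norm (ln (hN \<bar>t\<bar>) * (1 / X))"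
        by (simp only: real_norm_def abs_mult)
    qed
  qed
  show "Re (Jf (\<lambda>t. ln (hN \<bar>t\<bar>)) \<Xi>) \<le> 0"
  proof -
    have "0 \<le> (LBINT t. - (ln (hN \<bar>t\<bar>) * P t))"
      by (rule integral_nonneg_AE, rule AE_I2) (use mult_nonpos_nonneg[OF phi0 less_imp_le[OF Ppos]] in simp)
    then show ?thesis unfolding eq by simp
  qed
  have i2: "integrable lborel (\<lambda>t. indicator {Y - X..Y + X} t * (c / (2 * X)))"
    by (intro integrable_mult_left integrable_real_indicator) (auto simp: emeasure_lborel_Icc_eq)
  have "(LBINT t. ln (hN \<bar>t\<bar>) * P t) \<le> (LBINT t. indicator {Y - X..Y + X} t * (c / (2 * X)))"
  proof (rule integral_mono_AE[OF i1 i2])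
    show "AE t in lborel. ln (hN \<bar>t\<bar>) * P t \<le> indicator {Y - X..Y + X} t * (c / (2 * X))"
      using AE_lborel_singleton[of 0]
    proof eventually_elim
      fix t :: real assume t0: "t \<noteq> 0"
      show "ln (hN \<bar>t\<bar>) * P t \<le> indicator {Y - X..Y + X} t * (c / (2 * X))"
      proof (cases "t \<in> {Y - X..Y + X}")
        case False
        then show ?thesis using phi0[of t] Ppos[of t] by (simp add: mult_nonpos_nonneg less_imp_le)
      next
        case True
        have tY: "\<bar>t\<bar> \<le> \<bar>Y\<bar> + X" using True by auto
        have "ln (hN \<bar>t\<bar>) \<le> c"
          unfolding c_def using hpos[of "\<bar>t\<bar>"] t0 monoD[OF hmono tY] by simp
        have "\<bar>t - Y\<bar> \<le> \<bar>X\<bar>" using True X by auto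
        then have "(t - Y)\<^sup>2 \<le> X\<^sup>2" by (simp add: abs_le_square_iff)
        then have "X / (2 * X\<^sup>2) \<le> P t" unfolding P_def
          by (intro frac_le[of X X "X\<^sup>2 + (t - Y)\<^sup>2" "2 * X\<^sup>2"]) (use X in \<open>simp_all add: add_pos_nonneg\<close>)
        moreover have "X / (2 * X\<^sup>2) = 1 / (2 * X)" using X by (simp add: power2_eq_square)
        ultimately have P2: "P t \<ge> 1 / (2 * X)" by simp
        have "ln (hN \<bar>t\<bar>) * P t \<le> ln (hN \<bar>t\<bar>) * (1 / (2 * X))"
          using P2 phi0[of t] by (rule mult_left_mono_neg)
        also have "\<dots> \<le> c * (1 / (2 * X))"
          using \<open>ln (hN \<bar>t\<bar>) \<le> c\<close> X by (intro mult_right_mono) auto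
        finally show ?thesis using True by simp
      qed
    qed
  qed
  also have "(LBINT t. indicator {Y - X..Y + X} t * (c / (2 * X))) = c"
    using X by simp
  finally show "Re (Jf (\<lambda>t. ln (hN \<bar>t\<bar>)) \<Xi>) \<le> ln (hN (\<bar>Im \<Xi>\<bar> + Re \<Xi>))"
    unfolding eq c_def X_def Y_def .
qed



lemma N_facts:
  assumes sr: "strongly_regular M" and s: "s > 0" and sg: "1 < s * gammaM M"
  shows "\<exists>C G. C > 0 \<and> G > 1 \<and> (\<forall>p. M p powr s > 0) \<and> M 0 powr s = 1 \<and>
           (\<forall>j. (M (Suc j) powr s) / (M j powr s) \<ge> C * (real j + 1) powr G)"
proof -
  have pos: "\<forall>p. M p > 0" and M0: "M 0 = 1" using sr_basic[OF sr] by auto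
  obtain C G where "C > 0" "G > 1" "\<forall>j. M (Suc j) powr s / M j powr s \<ge> C * (real j + 1) powr G"
    using gamma_extract[OF sr s sg] by blast
  moreover have "\<forall>p. M p powr s > 0"
  proof
    fix p show "M p powr s > 0" using pos[rule_format, of p] by simp
  qed
  ultimately show ?thesis using M0 by auto
qed

lemma hN_props:
  assumes sr: "strongly_regular M" and s: "s > 0" and sg: "1 < s * gammaM M"
  defines "hN \<equiv> hM (\<lambda>p. M p powr s)"
  shows "integrable lborel (\<lambda>t. ln (hN \<bar>t\<bar>))" "mono hN" "\<And>t. t > 0 \<Longrightarrow> hN t > 0"
    "\<And>t. t > 0 \<Longrightarrow> hN t \<le> 1" "hN 0 = 0"
proof -
  obtain C G where C: "C > 0" and G: "G > 1" and pos: "\<forall>p. M p powr s > 0" and N0: "M 0 powr s = 1"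
    and q: "\<forall>j. (M (Suc j) powr s) / (M j powr s) \<ge> C * (real j + 1) powr G"
    using N_facts[OF sr s sg] by blast
  show "integrable lborel (\<lambda>t. ln (hN \<bar>t\<bar>))" unfolding hN_def
    by (rule phi_int[OF pos N0 C G]) (use q in auto)
  show "mono hN" unfolding hN_def by (rule hM_mono'[OF pos])
  show "\<And>t. t > 0 \<Longrightarrow> hN t > 0" unfolding hN_def by (rule phi_pos[OF pos N0 C G]) (use q in auto)
  show "\<And>t. t > 0 \<Longrightarrow> hN t \<le> 1" unfolding hN_def by (rule hM_le1[OF pos N0])
  show "hN 0 = 0" unfolding hN_def by (simp add: hM_def)
qed

lemma GM_eq: "GM M s w = exp (complex_of_real (1 / pi) * Jf (\<lambda>t. ln (hM (\<lambda>p. M p powr s) \<bar>t\<bar>)) (exp (complex_of_real s * w)))"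
  unfolding GM_def Jf_def ..

lemma Re_exp_pos: "\<bar>s * Im w\<bar> < pi / 2 \<Longrightarrow> Re (exp (complex_of_real s * w)) > 0"
  by (simp add: Re_exp cos_gt_zero_pi abs_less_iff)

lemma GM_holo:
  assumes sr: "strongly_regular M" and s: "s > 0" and sg: "1 < s * gammaM M"
  shows "GM M s holomorphic_on {w. \<bar>s * Im w\<bar> < pi / 2}"
proof -
  have J: "Jf (\<lambda>t. ln (hM (\<lambda>p. M p powr s) \<bar>t\<bar>)) holomorphic_on {\<Xi>. Re \<Xi> > 0}"
    by (rule J_holo[OF hN_props(1)[OF sr s sg]])
  have "(\<lambda>w. Jf (\<lambda>t. ln (hM (\<lambda>p. M p powr s) \<bar>t\<bar>)) (exp (complex_of_real s * w))) holomorphic_on {w. \<bar>s * Im w\<bar> < pi / 2}"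
    by (rule holomorphic_on_compose_gen[OF _ J, unfolded o_def])
       (auto intro!: holomorphic_intros Re_exp_pos)
  then show ?thesis unfolding GM_eq[abs_def] by (auto intro!: holomorphic_intros)
qed

lemma GM_bounds:
  assumes sr: "strongly_regular M" and s: "s > 0" and sg: "1 < s * gammaM M"
    and w: "\<bar>s * Im w\<bar> < pi / 2"
  shows "norm (GM M s w) \<le> 1"
    and "norm (GM M s w) \<le> hM M (2 powr (1 / s) * exp (Re w)) powr (s / pi)"
proof -
  define hN where "hN = hM (\<lambda>p. M p powr s)"
  define \<Xi> where "\<Xi> = exp (complex_of_real s * w)"
  have \<Xi>: "Re \<Xi> > 0" using Re_exp_pos[OF w] by (simp add: \<Xi>_def)
  note hp = hN_props[OF sr s sg, folded hN_def]
  have nG: "norm (GM M s w) = exp (Re (Jf (\<lambda>t. ln (hN \<bar>t\<bar>)) \<Xi>) / pi)"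
    unfolding GM_eq hN_def \<Xi>_def by simp
  note b = J_Re_bound[OF hp(1) \<Xi> hp(2) hp(3) hp(4) hp(5)]
  show "norm (GM M s w) \<le> 1" unfolding nG using b(2) by (simp add: divide_nonpos_pos)
  define y where "y = 2 * norm \<Xi>"
  have ny: "norm \<Xi> = exp (s * Re w)" by (simp add: \<Xi>_def)
  have y: "y > 0" by (simp add: y_def ny)
  have XY: "\<bar>Im \<Xi>\<bar> + Re \<Xi> \<le> y" unfolding y_def using abs_Im_le_cmod[of \<Xi>] complex_Re_le_cmod[of \<Xi>] by simp
  have XYp: "\<bar>Im \<Xi>\<bar> + Re \<Xi> > 0" using \<Xi> by simp
  have "norm (GM M s w) \<le> exp (ln (hN (\<bar>Im \<Xi>\<bar> + Re \<Xi>)) / pi)"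
    unfolding nG using b(1) by (simp add: divide_right_mono)
  also have "\<dots> = hN (\<bar>Im \<Xi>\<bar> + Re \<Xi>) powr (1 / pi)"
    using hp(3)[OF XYp] by (simp add: powr_def)
  also have "\<dots> \<le> hN y powr (1 / pi)"
    using hp(3)[OF XYp] monoD[OF hp(2) XY] by (intro powr_mono2) auto
  also have "hN y \<le> hM M (y powr (1 / s)) powr s"
  proof -
    have pos: "\<forall>p. M p > 0" using sr_basic[OF sr] by auto
    have "hN y powr (1 / s) \<le> hM M (y powr (1 / s))"
      unfolding hN_def by (rule hM_powr_rel[OF pos s y])
    then have "(hN y powr (1 / s)) powr s \<le> hM M (y powr (1 / s)) powr s"
      using hp(3)[OF y] s by (intro powr_mono2) auto
    then show ?thesis using hp(3)[OF y] s by (simp add: powr_powr)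
  qed
  then have "hN y powr (1 / pi) \<le> (hM M (y powr (1 / s)) powr s) powr (1 / pi)"
    using hp(3)[OF y] by (intro powr_mono2) auto
  also have "\<dots> = hM M (y powr (1 / s)) powr (s / pi)" by (simp add: powr_powr)
  also have "y powr (1 / s) = 2 powr (1 / s) * exp (Re w)"
    using s by (simp add: y_def ny powr_mult exp_powr_real)
  finally show "norm (GM M s w) \<le> hM M (2 powr (1 / s) * exp (Re w)) powr (s / pi)" .
qed

lemma eM_holo:
  assumes sr: "strongly_regular M" and s: "s > 0" and sg: "1 < s * gammaM M"
  shows "eM M s holomorphic_on {w. \<bar>s * Im w\<bar> < pi / 2}"
proof -
  have "(\<lambda>w. GM M s (- w)) holomorphic_on {w. \<bar>s * Im w\<bar> < pi / 2}"
    by (rule holomorphic_on_compose_gen[OF _ GM_holo[OF sr s sg], unfolded o_def]) (auto intro!: holomorphic_intros)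
  then show ?thesis unfolding eM_def[abs_def] by (auto intro!: holomorphic_intros)
qed

lemma eM_bounds:
  assumes sr: "strongly_regular M" and s: "s > 0" and sg: "1 < s * gammaM M"
    and w: "\<bar>s * Im w\<bar> < pi / 2"
  shows "norm (eM M s w) \<le> exp (Re w)"
    and "norm (eM M s w) \<le> exp (Re w) * hM M (2 powr (1 / s) * exp (- Re w)) powr (s / pi)"
proof -
  have w': "\<bar>s * Im (- w)\<bar> < pi / 2" using w by simp
  have n: "norm (eM M s w) = exp (Re w) * norm (GM M s (- w))" by (simp add: eM_def norm_mult)
  show "norm (eM M s w) \<le> exp (Re w)" unfolding n using GM_bounds(1)[OF sr s sg w'] by simp
  show "norm (eM M s w) \<le> exp (Re w) * hM M (2 powr (1 / s) * exp (- Re w)) powr (s / pi)"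
    unfolding n using GM_bounds(2)[OF sr s sg w'] by simp
qed



lemma hM_pos_M:
  assumes sr: "strongly_regular M" and s: "s > 0" and sg: "1 < s * gammaM M" and t: "t > 0"
  shows "hM M t > 0"
proof -
  have pos: "\<forall>p. M p > 0" using sr_basic[OF sr] by auto
  have tp: "t powr s > 0" using t by simp
  have "0 < hM (\<lambda>p. M p powr s) (t powr s) powr (1 / s)"
    using hN_props(3)[OF sr s sg tp] by simp
  also have "\<dots> \<le> hM M ((t powr s) powr (1 / s))" by (rule hM_powr_rel[OF pos s tp])
  also have "(t powr s) powr (1 / s) = t" using s t by (simp add: powr_powr)
  finally show ?thesis .
qed

lemma compact_rect: "compact {v::complex. a \<le> Re v \<and> Re v \<le> b \<and> c \<le> Im v \<and> Im v \<le> e}"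
proof (rule compact_eq_bounded_closed[THEN iffD2], rule conjI)
  let ?R = "\<bar>a\<bar> + \<bar>b\<bar> + \<bar>c\<bar> + \<bar>e\<bar>"
  show "bounded {v::complex. a \<le> Re v \<and> Re v \<le> b \<and> c \<le> Im v \<and> Im v \<le> e}"
  proof (rule bounded_subset[OF bounded_cball[of 0 ?R]], safe)
    fix v :: complex assume "a \<le> Re v" "Re v \<le> b" "c \<le> Im v" "Im v \<le> e"
    then have "\<bar>Re v\<bar> + \<bar>Im v\<bar> \<le> ?R" by linarith
    then show "v \<in> cball 0 ?R" using cmod_le[of v] by simp
  qed
  have eq: "{v::complex. a \<le> Re v \<and> Re v \<le> b \<and> c \<le> Im v \<and> Im v \<le> e} =
    {v. (\<lambda>_. a) v \<le> Re v} \<inter> {v. Re v \<le> (\<lambda>_. b) v} \<inter> {v. (\<lambda>_. c) v \<le> Im v} \<inter> {v. Im v \<le> (\<lambda>_. e) v}"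
    by auto
  show "closed {v::complex. a \<le> Re v \<and> Re v \<le> b \<and> c \<le> Im v \<and> Im v \<le> e}"
    unfolding eq by (intro closed_Int closed_Collect_le continuous_intros)
qed

lemma proper_sub_in_sector:
  assumes "proper_subsector d' \<theta>2 d \<alpha>" "\<bar>Im v - d'\<bar> \<le> \<theta>' * pi / 2" "\<theta>' < \<theta>2"
  shows "v \<in> sector d \<alpha>" "v \<in> sector d' \<theta>2"
proof -
  have "\<theta>' * pi / 2 < \<theta>2 * pi / 2" using assms(3) by (simp add: divide_strict_right_mono)
  then have a: "\<bar>Im v - d'\<bar> < \<theta>2 * pi / 2" using assms(2) by linarith
  then show "v \<in> sector d' \<theta>2" by (simp add: sector_def)
  have "d - \<alpha> * pi / 2 < Im v \<and> Im v < d + \<alpha> * pi / 2"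
    using a assms(1) unfolding proper_subsector_def abs_less_iff by linarith
  then show "v \<in> sector d \<alpha>" unfolding sector_def mem_Collect_eq abs_less_iff by linarith
qed

lemma f_bdd0:
  assumes f: "f \<in> AM M d \<alpha>" and ps: "proper_subsector d' \<theta>2 d \<alpha>" and th: "0 < \<theta>'" "\<theta>' < \<theta>2" and r: "r > 0"
  shows "\<exists>B. \<forall>v. \<bar>Im v - d'\<bar> \<le> \<theta>' * pi / 2 \<and> exp (Re v) \<le> r \<longrightarrow> norm (f v) \<le> B"
proof -
  have hol: "f holomorphic_on sector d \<alpha>" and co: "cont_at_origin f d \<alpha>" using f by (auto simp: AM_def)
  obtain L where L: "\<forall>\<epsilon>>0. \<exists>\<eta>>0. \<forall>w\<in>bsector d' \<theta>2 r. exp (Re w) < \<eta> \<longrightarrow> cmod (f w - L) < \<epsilon>"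
    using co ps r unfolding cont_at_origin_def by blast
  obtain \<eta> where \<eta>: "\<eta> > 0" and L1: "\<And>w. w \<in> bsector d' \<theta>2 r \<Longrightarrow> exp (Re w) < \<eta> \<Longrightarrow> cmod (f w - L) < 1"
    using L by (meson zero_less_one)
  define \<eta>0 where "\<eta>0 = min \<eta> r"
  have \<eta>0: "\<eta>0 > 0" using \<eta> r by (simp add: \<eta>0_def)
  define K where "K = {v::complex. ln \<eta>0 \<le> Re v \<and> Re v \<le> ln r \<and> d' - \<theta>' * pi / 2 \<le> Im v \<and> Im v \<le> d' + \<theta>' * pi / 2}"
  have Kc: "compact K" unfolding K_def by (rule compact_rect)
  have KS: "K \<subseteq> sector d \<alpha>"
  proof
    fix x assume "x \<in> K"
    then have "\<bar>Im x - d'\<bar> \<le> \<theta>' * pi / 2" unfolding K_def abs_le_iff mem_Collect_eq by linarith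
    then show "x \<in> sector d \<alpha>" by (rule proper_sub_in_sector(1)[OF ps _ th(2)])
  qed
  have "compact (f ` K)"
    by (rule compact_continuous_image[OF holomorphic_on_imp_continuous_on[OF holomorphic_on_subset[OF hol KS]] Kc])
  then obtain B1 where B1: "\<And>v. v \<in> K \<Longrightarrow> norm (f v) \<le> B1"
    using compact_imp_bounded bounded_iff by (metis imageI)
  show ?thesis
  proof (intro exI[of _ "max B1 (norm L + 1)"] allI impI)
    fix v assume v: "\<bar>Im v - d'\<bar> \<le> \<theta>' * pi / 2 \<and> exp (Re v) \<le> r"
    show "norm (f v) \<le> max B1 (norm L + 1)"
    proof (cases "exp (Re v) < \<eta>0")
      case True
      have "v \<in> bsector d' \<theta>2 r"
        using proper_sub_in_sector(2)[OF ps _ th(2), of v] v True by (auto simp: bsector_def sector_def \<eta>0_def)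
      then have "cmod (f v - L) < 1" using L1 True by (simp add: \<eta>0_def)
      then have "norm (f v) \<le> norm L + 1" using norm_triangle_ineq2[of "f v" L] by simp
      then show ?thesis by simp
    next
      case False
      have "\<eta>0 \<le> exp (Re v)" using False by simp
      then have "ln \<eta>0 \<le> Re v" using \<eta>0 by (metis exp_gt_zero ln_exp ln_le_cancel_iff)
      moreover have "Re v \<le> ln r" using v r by (metis exp_le_cancel_iff exp_ln)
      ultimately have "v \<in> K" using v unfolding K_def mem_Collect_eq abs_le_iff by linarith
      then show ?thesis using B1 by fastforce
    qed
  qed
qed



lemma pow_decay:
  fixes h c t :: real
  assumes h0: "0 \<le> h" and h1: "h \<le> 1" and hc: "h \<le> c / t\<^sup>2" and t: "t > 0"
  shows "h \<le> 2 * (1 + c) / (1 + t\<^sup>2)"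
proof -
  have "0 \<le> c / t\<^sup>2" using h0 hc by linarith
  then have c0: "0 \<le> c" using t by (simp add: zero_le_divide_iff)
  have p: "0 < 1 + t\<^sup>2" by (simp add: add_pos_nonneg)
  show ?thesis
  proof (cases "t \<le> 1")
    case True
    have "t\<^sup>2 \<le> 1" using True t by (simp add: power_le_one)
    then have "1 \<le> 2 / (1 + t\<^sup>2)" using p by (simp add: le_divide_eq)
    also have "\<dots> \<le> 2 * (1 + c) / (1 + t\<^sup>2)" using c0 p by (intro divide_right_mono) auto
    finally show ?thesis using h1 by linarith
  next
    case False
    have "1 \<le> t\<^sup>2" using False by (simp add: one_le_power)
    then have t1: "1 + t\<^sup>2 \<le> 2 * t\<^sup>2" by simp
    have "c / t\<^sup>2 = (2 * c) / (2 * t\<^sup>2)" by simp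
    also have "\<dots> \<le> (2 * c) / (1 + t\<^sup>2)" by (rule frac_le) (use c0 p t1 in auto)
    also have "\<dots> \<le> 2 * (1 + c) / (1 + t\<^sup>2)" using p by (intro divide_right_mono) auto
    finally show ?thesis using hc by linarith
  qed
qed

lemma dom_bound:
  assumes sr: "strongly_regular M" and s: "s > 0" and sg: "1 < s * gammaM M"
    and f: "f \<in> AM M d \<alpha>" and ps: "proper_subsector d' \<theta>2 d \<alpha>" and th: "0 < \<theta>'" "\<theta>' < \<theta>2"
  shows "\<exists>\<rho>>0. \<forall>lo. \<exists>K. \<forall>v0 w t. 0 < t \<and> \<bar>Re v0\<bar> \<le> 1 \<and> \<bar>Im v0 - d'\<bar> \<le> \<theta>' * pi / 2 \<and> lo \<le> Re w \<and>
      exp (Re w) < \<rho> \<and> \<bar>s * (Im v0 - Im w)\<bar> < pi / 2 \<longrightarrow>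
      norm (eM M s (complex_of_real (ln t) + v0 - w) * f (complex_of_real (ln t) + v0) / complex_of_real t) \<le> K / (1 + t\<^sup>2)"
proof -
  have pos: "\<forall>p. M p > 0" and M0: "M 0 = 1" using sr_basic[OF sr] by auto
  obtain A where A: "A \<ge> 1" and mu: "\<And>p l. M (p + l) \<le> A ^ (p + l) * M p * M l"
    using sr_basic(4)[OF sr] by blast
  obtain r k4 k5 where r: "r > 0" and k4: "k4 > 0" and k5: "k5 > 0"
    and fb: "\<And>w. w \<in> sector d' \<theta>2 \<Longrightarrow> exp (Re w) \<ge> r \<Longrightarrow> cmod (f w) \<le> k4 / hM M (k5 / exp (Re w))"
    using f ps unfolding AM_def by blast
  obtain B where B: "\<And>v. \<bar>Im v - d'\<bar> \<le> \<theta>' * pi / 2 \<Longrightarrow> exp (Re v) \<le> r \<Longrightarrow> norm (f v) \<le> B"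
    using f_bdd0[OF f ps th r] by blast
  define B' where "B' = max B 0"
  have B': "B' \<ge> 0" "\<And>v. \<bar>Im v - d'\<bar> \<le> \<theta>' * pi / 2 \<Longrightarrow> exp (Re v) \<le> r \<Longrightarrow> norm (f v) \<le> B'"
    using B by (auto simp: B'_def intro: le_max_iff_disj[THEN iffD2])
  obtain k :: nat where k: "2 * pi / s < real k" using reals_Archimedean2 by blast
  have k2: "2 \<le> 2 ^ k * s / pi"
  proof -
    have "real k < 2 ^ k" using less_exp[of k] by (metis of_nat_less_iff of_nat_numeral of_nat_power)
    then have "2 * pi / s < 2 ^ k" using k by linarith
    then have "2 * pi < 2 ^ k * s" using s by (simp add: divide_less_eq)
    then show ?thesis by (simp add: le_divide_eq mult.commute)
  qed
  define c0 where "c0 = 2 powr (1 / s)"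
  have c0: "c0 > 0" by (simp add: c0_def)
  define \<rho> where "\<rho> = k5 / (A ^ k * c0)"
  have \<rho>: "\<rho> > 0" using k5 A c0 by (simp add: \<rho>_def)
  have hMpos: "\<And>x. x > 0 \<Longrightarrow> hM M x > 0" by (rule hM_pos_M[OF sr s sg])
  have hMle1: "\<And>x. x > 0 \<Longrightarrow> hM M x \<le> 1" by (rule hM_le1[OF pos M0])
  show ?thesis
  proof (rule exI[of _ \<rho>], intro conjI allI)
    show "\<rho> > 0" by (rule \<rho>)
    fix lo :: real
    define E where "E = exp (1 - lo)"
    define c where "c = M 2 * (k5 * exp 1)\<^sup>2"
    define K where "K = E * max (B' * (1 + (r * exp 1)\<^sup>2)) (k4 * (2 * (1 + c)))"
    show "\<exists>K. \<forall>v0 w t. 0 < t \<and> \<bar>Re v0\<bar> \<le> 1 \<and> \<bar>Im v0 - d'\<bar> \<le> \<theta>' * pi / 2 \<and> lo \<le> Re w \<and>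
      exp (Re w) < \<rho> \<and> \<bar>s * (Im v0 - Im w)\<bar> < pi / 2 \<longrightarrow>
      norm (eM M s (complex_of_real (ln t) + v0 - w) * f (complex_of_real (ln t) + v0) / complex_of_real t) \<le> K / (1 + t\<^sup>2)"
    proof (intro exI[of _ K] allI impI)
      fix v0 w and t :: real
      assume as: "0 < t \<and> \<bar>Re v0\<bar> \<le> 1 \<and> \<bar>Im v0 - d'\<bar> \<le> \<theta>' * pi / 2 \<and> lo \<le> Re w \<and>
        exp (Re w) < \<rho> \<and> \<bar>s * (Im v0 - Im w)\<bar> < pi / 2"
      then have t: "t > 0" and a1: "\<bar>Re v0\<bar> \<le> 1" and im: "\<bar>Im v0 - d'\<bar> \<le> \<theta>' * pi / 2"
        and lo: "lo \<le> Re w" and wr: "exp (Re w) < \<rho>" and sw: "\<bar>s * (Im v0 - Im w)\<bar> < pi / 2" by auto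
      define a where "a = Re v0"
      define \<zeta> where "\<zeta> = complex_of_real (ln t) + v0 - w"
      define v where "v = complex_of_real (ln t) + v0"
      have Rez: "Re \<zeta> = ln t + a - Re w" by (simp add: \<zeta>_def a_def)
      have Imz: "\<bar>s * Im \<zeta>\<bar> < pi / 2" using sw by (simp add: \<zeta>_def)
      have Rev: "exp (Re v) = t * exp a" using t by (simp add: v_def a_def exp_add)
      have Imv: "\<bar>Im v - d'\<bar> \<le> \<theta>' * pi / 2" using im by (simp add: v_def)
      have expz: "exp (Re \<zeta>) = t * exp (a - Re w)" using t by (simp add: Rez exp_add exp_diff)
      have Ebd: "exp (a - Re w) \<le> E" unfolding E_def using a1 lo by (simp add: a_def abs_le_iff)
      have E0: "E > 0" by (simp add: E_def)
      have nI: "norm (eM M s \<zeta> * f v / complex_of_real t) = norm (eM M s \<zeta>) * norm (f v) / t"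
        using t by (simp add: norm_mult norm_divide)
      have main: "norm (eM M s \<zeta> * f v / complex_of_real t) \<le> K / (1 + t\<^sup>2)"
      proof (cases "exp (Re v) \<le> r")
        case True
        have fv: "norm (f v) \<le> B'" by (rule B'(2)[OF Imv True])
        have "norm (eM M s \<zeta>) * norm (f v) / t \<le> (t * exp (a - Re w)) * B' / t"
          using eM_bounds(1)[OF sr s sg Imz] fv t unfolding expz
          by (intro divide_right_mono mult_mono) auto
        also have "\<dots> = exp (a - Re w) * B'" using t by simp
        also have "\<dots> \<le> E * B'" using Ebd B'(1) by (intro mult_right_mono) auto
        finally have b1: "norm (eM M s \<zeta> * f v / complex_of_real t) \<le> E * B'" unfolding nI .
        have tr: "t \<le> r * exp 1"
        proof -
          have "t * exp a \<le> r" using True Rev by simp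
          then have "t \<le> r / exp a" by (simp add: le_divide_eq)
          also have "\<dots> = r * exp (- a)" by (simp add: exp_minus field_simps)
          also have "\<dots> \<le> r * exp 1" using r a1 by (intro mult_left_mono) (auto simp: a_def abs_le_iff)
          finally show ?thesis .
        qed
        have "1 + t\<^sup>2 \<le> 1 + (r * exp 1)\<^sup>2" using tr t by (simp add: power_mono)
        then have "E * B' \<le> E * (B' * (1 + (r * exp 1)\<^sup>2)) / (1 + t\<^sup>2)"
          using E0 B'(1) by (simp add: le_divide_eq add_pos_nonneg mult_left_mono)
        also have "\<dots> \<le> K / (1 + t\<^sup>2)" unfolding K_def using E0
          by (intro divide_right_mono mult_left_mono) (auto simp: add_pos_nonneg)
        finally show ?thesis using b1 by linarith
      next
        case False
        define u where "u = k5 / (t * exp a)"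
        have u: "u > 0" using k5 t by (simp add: u_def)
        have hu: "hM M u > 0" "hM M u \<le> 1" using hMpos[OF u] hMle1[OF u] by auto
        have vS: "v \<in> sector d' \<theta>2" by (rule proper_sub_in_sector(2)[OF ps Imv th(2)])
        have fv: "norm (f v) \<le> k4 / hM M u"
          using fb[OF vS] False unfolding u_def Rev by simp
        have arg: "2 powr (1 / s) * exp (- Re \<zeta>) \<le> u / A ^ k"
        proof -
          have "2 powr (1 / s) * exp (- Re \<zeta>) = c0 * exp (Re w) / (t * exp a)"
            unfolding c0_def Rez using t by (simp add: exp_diff exp_add exp_minus field_simps)
          also have "\<dots> \<le> c0 * \<rho> / (t * exp a)"
            using wr c0 t by (intro divide_right_mono mult_left_mono) auto
          also have "\<dots> = u / A ^ k" using c0 A by (simp add: \<rho>_def u_def field_simps)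
          finally show ?thesis .
        qed
        have argp: "2 powr (1 / s) * exp (- Re \<zeta>) > 0" by simp
        have h1: "hM M (2 powr (1 / s) * exp (- Re \<zeta>)) \<le> hM M u ^ (2 ^ k)"
        proof -
          have "hM M (2 powr (1 / s) * exp (- Re \<zeta>)) \<le> hM M (u / A ^ k)" by (rule hM_mono[OF pos arg])
          also have "\<dots> \<le> hM M u ^ (2 ^ k)" by (rule hM_sq_iter[OF pos M0 A mu u])
          finally show ?thesis .
        qed
        have h2: "hM M (2 powr (1 / s) * exp (- Re \<zeta>)) powr (s / pi) \<le> (hM M u)\<^sup>2"
        proof -
          have "hM M (2 powr (1 / s) * exp (- Re \<zeta>)) powr (s / pi) \<le> (hM M u ^ (2 ^ k)) powr (s / pi)"
            using h1 hM_nonneg[OF pos] s by (intro powr_mono2) auto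
          also have "\<dots> = hM M u powr (2 ^ k * s / pi)"
            using hu by (simp add: powr_realpow[symmetric] powr_powr)
          also have "\<dots> \<le> hM M u powr 2" using k2 hu by (intro powr_mono') auto
          also have "\<dots> = (hM M u)\<^sup>2" using hu by (simp add: powr_realpow)
          finally show ?thesis .
        qed
        have eb: "norm (eM M s \<zeta>) \<le> t * exp (a - Re w) * (hM M u)\<^sup>2"
          using eM_bounds(2)[OF sr s sg Imz] h2 unfolding expz
          by (smt (verit, best) exp_gt_zero mult_left_mono mult_pos_pos t)
        have "norm (eM M s \<zeta>) * norm (f v) / t \<le> (t * exp (a - Re w) * (hM M u)\<^sup>2) * (k4 / hM M u) / t"
          using eb fv t by (intro divide_right_mono mult_mono) auto
        also have "\<dots> = exp (a - Re w) * k4 * hM M u" using t hu by (simp add: power2_eq_square)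
        also have "\<dots> \<le> E * k4 * hM M u" using Ebd k4 hu by (intro mult_right_mono) auto
        finally have b2: "norm (eM M s \<zeta> * f v / complex_of_real t) \<le> E * k4 * hM M u" unfolding nI .
        have hc: "hM M u \<le> c / t\<^sup>2"
        proof -
          have "hM M u \<le> M 2 * u ^ 2" by (rule hM_le[OF pos u])
          also have "u ^ 2 \<le> (k5 * exp 1)\<^sup>2 / t\<^sup>2"
          proof -
            have "u = k5 * exp (- a) / t" using t by (simp add: u_def exp_minus field_simps)
            also have "\<dots> \<le> k5 * exp 1 / t" using k5 t a1
              by (intro divide_right_mono mult_left_mono) (auto simp: a_def abs_le_iff)
            finally have "u \<le> k5 * exp 1 / t" .
            then have "u ^ 2 \<le> (k5 * exp 1 / t) ^ 2" using u by (intro power_mono) auto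
            then show ?thesis by (simp add: power_divide)
          qed
          then have "M 2 * u ^ 2 \<le> M 2 * ((k5 * exp 1)\<^sup>2 / t\<^sup>2)" using pos by (intro mult_left_mono) (auto intro: less_imp_le)
          finally show ?thesis by (simp add: c_def)
        qed
        have "hM M u \<le> 2 * (1 + c) / (1 + t\<^sup>2)" by (rule pow_decay[OF _ hu(2) hc t]) (use hu in simp)
        then have "E * k4 * hM M u \<le> E * k4 * (2 * (1 + c) / (1 + t\<^sup>2))" using E0 k4 by (intro mult_left_mono) auto
        also have "\<dots> = E * (k4 * (2 * (1 + c))) / (1 + t\<^sup>2)" by simp
        also have "\<dots> \<le> K / (1 + t\<^sup>2)" unfolding K_def using E0
          by (intro divide_right_mono mult_left_mono) (auto simp: add_pos_nonneg)
        finally show ?thesis using b2 by linarith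
      qed
      then show "norm (eM M s (complex_of_real (ln t) + v0 - w) * f (complex_of_real (ln t) + v0) / complex_of_real t) \<le> K / (1 + t\<^sup>2)"
        unfolding \<zeta>_def v_def .
    qed
  qed
qed



lemma integrable_inv_sq: "integrable lborel (\<lambda>t::real. 1 / (1 + t\<^sup>2))"
proof -
  define g where "g t = indicator {1..} t * t powr (-2)" for t :: real
  have "(\<lambda>t. t powr (-2)) integrable_on {1::real..}"
    using has_integral_powr_to_inf[of "-2" 1] unfolding integrable_on_def by auto
  then have "(\<lambda>t. t powr (-2)) absolutely_integrable_on {1::real..}"
    by (subst absolutely_integrable_on_iff_nonneg) auto
  then have "integrable lebesgue (\<lambda>t. indicator {1::real..} t *\<^sub>R t powr (-2))"
    unfolding set_integrable_def .
  then have gi: "integrable lborel g"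
    unfolding g_def by (subst (asm) integrable_completion) auto
  have gi2: "integrable lborel (\<lambda>t. g (0 + (-1) * t))"
    by (rule lborel_integrable_real_affine[OF gi]) simp
  have ii: "integrable lborel (\<lambda>t::real. indicator {-1..1} t :: real)"
    by (intro integrable_real_indicator) (auto simp: emeasure_lborel_Icc_eq)
  show ?thesis
  proof (rule Bochner_Integration.integrable_bound[of _ "\<lambda>t. indicator {-1..1} t + g t + g (0 + (-1) * t)"])
    show "integrable lborel (\<lambda>t. indicator {-1..1} t + g t + g (0 + (-1) * t))"
      using ii gi gi2 by auto
    show "(\<lambda>t::real. 1 / (1 + t\<^sup>2)) \<in> borel_measurable lborel" by measurable
    show "AE t in lborel. norm (1 / (1 + t\<^sup>2)) \<le> norm (indicator {-1..1} t + g t + g (0 + (-1) * t))"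
    proof (intro AE_I2)
      fix t :: real
      have p: "1 + t\<^sup>2 > 0" by (simp add: add_pos_nonneg)
      have bd: "1 / (1 + t\<^sup>2) \<le> indicator {-1..1} t + g t + g (0 + (-1) * t)"
      proof (cases "\<bar>t\<bar> \<le> 1")
        case True
        have "1 / (1 + t\<^sup>2) \<le> 1" using p by simp
        moreover have "g t \<ge> 0" "g (0 + (-1) * t) \<ge> 0" by (auto simp: g_def)
        ultimately show ?thesis using True by (auto simp: indicator_def abs_le_iff)
      next
        case False
        have t2: "t\<^sup>2 > 0" using False by simp
        have "1 / (1 + t\<^sup>2) \<le> 1 / t\<^sup>2" using t2 p by (intro divide_left_mono) (auto intro: mult_pos_pos)
        also have "1 / t\<^sup>2 = \<bar>t\<bar> powr (-2)" using False
          by (simp add: powr_minus_divide powr_realpow[symmetric])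
        also have "\<dots> = g t + g (0 + (-1) * t)"
          using False by (cases "t > 0") (auto simp: g_def indicator_def)
        finally show ?thesis using False by (simp add: indicator_def abs_le_iff)
      qed
      have "0 \<le> 1 / (1 + t\<^sup>2)" using p by simp
      then show "norm (1 / (1 + t\<^sup>2)) \<le> norm (indicator {-1..1} t + g t + g (0 + (-1) * t))"
        using bd by simp
    qed
  qed
qed



definition lk :: "(nat \<Rightarrow> real) \<Rightarrow> real \<Rightarrow> (complex \<Rightarrow> complex) \<Rightarrow> complex \<Rightarrow> complex \<Rightarrow> real \<Rightarrow> complex" where
  "lk M s f v0 w t = indicator {0<..} t *\<^sub>R (eM M s (complex_of_real (ln t) + v0 - w) * f (complex_of_real (ln t) + v0) / complex_of_real t)"

definition Lam :: "(nat \<Rightarrow> real) \<Rightarrow> real \<Rightarrow> (complex \<Rightarrow> complex) \<Rightarrow> complex \<Rightarrow> complex \<Rightarrow> complex" where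
  "Lam M s f v0 w = (\<integral>t. lk M s f v0 w t \<partial>lborel)"

lemma LapM_Lam: "LapM M s f \<tau> w = Lam M s f (\<i> * complex_of_real \<tau>) w"
  unfolding LapM_def Lam_def lk_def lap_integrand_def set_lebesgue_integral_def ..

lemma lap_integrable_iff: "set_integrable lborel {0<..} (lap_integrand M s f \<tau> w) \<longleftrightarrow> integrable lborel (lk M s f (\<i> * complex_of_real \<tau>) w)"
  unfolding set_integrable_def lk_def lap_integrand_def ..

lemma lk_meas:
  assumes sr: "strongly_regular M" and s: "s > 0" and sg: "1 < s * gammaM M"
    and f: "f \<in> AM M d \<alpha>" and v0: "\<bar>Im v0 - d\<bar> < \<alpha> * pi / 2" and vw: "\<bar>s * (Im v0 - Im w)\<bar> < pi / 2"
  shows "lk M s f v0 w \<in> borel_measurable lborel"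
proof -
  have hol: "f holomorphic_on sector d \<alpha>" using f by (simp add: AM_def)
  have c1: "continuous_on {0<..} (\<lambda>t::real. complex_of_real (ln t) + v0 - w)"
    by (intro continuous_intros) auto
  have c2: "continuous_on {0<..} (\<lambda>t::real. complex_of_real (ln t) + v0)"
    by (intro continuous_intros) auto
  have ce: "continuous_on {0<..} (\<lambda>t::real. eM M s (complex_of_real (ln t) + v0 - w))"
    by (rule continuous_on_compose2[OF holomorphic_on_imp_continuous_on[OF eM_holo[OF sr s sg]] c1])
       (use vw in auto)
  have cf: "continuous_on {0<..} (\<lambda>t::real. f (complex_of_real (ln t) + v0))"
    by (rule continuous_on_compose2[OF holomorphic_on_imp_continuous_on[OF hol] c2])
       (use v0 in \<open>auto simp: sector_def\<close>)
  have "continuous_on {0<..} (\<lambda>t::real. eM M s (complex_of_real (ln t) + v0 - w) * f (complex_of_real (ln t) + v0) / complex_of_real t)"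
    by (intro continuous_intros ce cf) auto
  then have "(\<lambda>t::real. indicator {0<..} t *\<^sub>R (eM M s (complex_of_real (ln t) + v0 - w) * f (complex_of_real (ln t) + v0) / complex_of_real t)) \<in> borel_measurable borel"
    by (intro borel_measurable_continuous_on_indicator) auto
  then show ?thesis unfolding lk_def[abs_def] by simp
qed

lemma lk_bound:
  assumes sr: "strongly_regular M" and s: "s > 0" and sg: "1 < s * gammaM M"
    and f: "f \<in> AM M d \<alpha>" and ps: "proper_subsector d' \<theta>2 d \<alpha>" and th: "0 < \<theta>'" "\<theta>' < \<theta>2"
  shows "\<exists>\<rho>>0. \<forall>lo. \<exists>K\<ge>0. \<forall>v0 w t. \<bar>Re v0\<bar> \<le> 1 \<and> \<bar>Im v0 - d'\<bar> \<le> \<theta>' * pi / 2 \<and> lo \<le> Re w \<and>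
      exp (Re w) < \<rho> \<and> \<bar>s * (Im v0 - Im w)\<bar> < pi / 2 \<longrightarrow> norm (lk M s f v0 w t) \<le> K / (1 + t\<^sup>2)"
proof -
  obtain \<rho> where \<rho>: "\<rho> > 0" and D: "\<forall>lo. \<exists>K. \<forall>v0 w t. 0 < t \<and> \<bar>Re v0\<bar> \<le> 1 \<and> \<bar>Im v0 - d'\<bar> \<le> \<theta>' * pi / 2 \<and> lo \<le> Re w \<and>
      exp (Re w) < \<rho> \<and> \<bar>s * (Im v0 - Im w)\<bar> < pi / 2 \<longrightarrow>
      norm (eM M s (complex_of_real (ln t) + v0 - w) * f (complex_of_real (ln t) + v0) / complex_of_real t) \<le> K / (1 + t\<^sup>2)"
    using dom_bound[OF sr s sg f ps th] by blast
  show ?thesis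
  proof (rule exI[of _ \<rho>], intro conjI allI)
    show "\<rho> > 0" by (rule \<rho>)
    fix lo
    obtain K where K: "\<And>v0 w t. 0 < t \<and> \<bar>Re v0\<bar> \<le> 1 \<and> \<bar>Im v0 - d'\<bar> \<le> \<theta>' * pi / 2 \<and> lo \<le> Re w \<and>
      exp (Re w) < \<rho> \<and> \<bar>s * (Im v0 - Im w)\<bar> < pi / 2 \<Longrightarrow>
      norm (eM M s (complex_of_real (ln t) + v0 - w) * f (complex_of_real (ln t) + v0) / complex_of_real t) \<le> K / (1 + t\<^sup>2)"
      using D by blast
    show "\<exists>K\<ge>0. \<forall>v0 w t. \<bar>Re v0\<bar> \<le> 1 \<and> \<bar>Im v0 - d'\<bar> \<le> \<theta>' * pi / 2 \<and> lo \<le> Re w \<and>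
      exp (Re w) < \<rho> \<and> \<bar>s * (Im v0 - Im w)\<bar> < pi / 2 \<longrightarrow> norm (lk M s f v0 w t) \<le> K / (1 + t\<^sup>2)"
    proof (intro exI[of _ "max K 0"] conjI allI impI)
      fix v0 w and t :: real
      assume c: "\<bar>Re v0\<bar> \<le> 1 \<and> \<bar>Im v0 - d'\<bar> \<le> \<theta>' * pi / 2 \<and> lo \<le> Re w \<and> exp (Re w) < \<rho> \<and> \<bar>s * (Im v0 - Im w)\<bar> < pi / 2"
      have p: "1 + t\<^sup>2 > 0" by (simp add: add_pos_nonneg)
      have m: "K / (1 + t\<^sup>2) \<le> max K 0 / (1 + t\<^sup>2)" using p by (intro divide_right_mono) auto
      show "norm (lk M s f v0 w t) \<le> max K 0 / (1 + t\<^sup>2)"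
      proof (cases "t > 0")
        case True
        then show ?thesis using K[of t v0 w] c m by (simp add: lk_def)
      next
        case False
        then show ?thesis using p by (simp add: lk_def)
      qed
    qed simp
  qed
qed



lemma Lam_translate: "Lam M s f (v0 + complex_of_real c) w = Lam M s f v0 w"
proof -
  have ec: "exp c \<noteq> 0" by simp
  have "Lam M s f v0 w = \<bar>exp c\<bar> *\<^sub>R (\<integral>t. lk M s f v0 w (0 + exp c * t) \<partial>lborel)"
    unfolding Lam_def by (rule lborel_integral_real_affine[OF ec])
  also have "\<dots> = (\<integral>t. exp c *\<^sub>R lk M s f v0 w (exp c * t) \<partial>lborel)" by simp
  also have "\<dots> = (\<integral>t. lk M s f (v0 + complex_of_real c) w t \<partial>lborel)"
  proof (rule Bochner_Integration.integral_cong[OF refl])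
    fix t :: real
    show "exp c *\<^sub>R lk M s f v0 w (exp c * t) = lk M s f (v0 + complex_of_real c) w t"
    proof (cases "t > 0")
      case True
      have l: "ln (exp c * t) = c + ln t" using True by (simp add: ln_mult)
      have e: "complex_of_real (exp c * t) = complex_of_real (exp c) * complex_of_real t" by simp
      have "exp c *\<^sub>R lk M s f v0 w (exp c * t)
          = complex_of_real (exp c) * (eM M s (complex_of_real (c + ln t) + v0 - w) * f (complex_of_real (c + ln t) + v0) / (complex_of_real (exp c) * complex_of_real t))"
        using True unfolding lk_def l e by (simp add: scaleR_conv_of_real)
      also have "\<dots> = eM M s (complex_of_real (ln t) + (v0 + complex_of_real c) - w) * f (complex_of_real (ln t) + (v0 + complex_of_real c)) / complex_of_real t"
        by (simp add: algebra_simps)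
      finally show ?thesis using True by (simp add: lk_def)
    next
      case False
      then show ?thesis by (simp add: lk_def mult_pos_pos[of "exp c"] zero_less_mult_iff)
    qed
  qed
  finally show ?thesis unfolding Lam_def ..
qed

lemma deriv_zero_of_real_invariant:
  assumes d: "(F has_field_derivative D) (at z)" and inv: "\<And>c. F (z + complex_of_real c) = F z"
  shows "D = 0"
proof -
  have "((\<lambda>h. (F (z + h) - F z) / h) \<longlongrightarrow> D) (at 0)" using d unfolding DERIV_def .
  moreover have lim: "filterlim (\<lambda>c::real. complex_of_real c) (at 0) (at 0)"
  proof (rule filterlim_atI)
    show "((\<lambda>c::real. complex_of_real c) \<longlongrightarrow> 0) (at 0)" by (intro tendsto_eq_intros) auto
    show "\<forall>\<^sub>F c in at (0::real). complex_of_real c \<noteq> 0" by (auto simp: eventually_at_filter)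
  qed
  ultimately have "((\<lambda>c::real. (F (z + complex_of_real c) - F z) / complex_of_real c) \<longlongrightarrow> D) (at 0)"
    by (rule filterlim_compose[unfolded o_def])
  then have "((\<lambda>c::real. 0) \<longlongrightarrow> D) (at 0)" using inv by simp
  from tendsto_unique[OF at_neq_bot tendsto_const this] show "D = 0" by simp
qed

lemma Lam_main:
  assumes sr: "strongly_regular M" and s: "s > 0" and sg: "1 < s * gammaM M"
    and f: "f \<in> AM M d \<alpha>" and ps: "proper_subsector d' \<theta>2 d \<alpha>" and th: "0 < \<theta>'" "\<theta>' < \<theta>2"
  shows "\<exists>\<rho>>0.
    (\<forall>v0 w. \<bar>Re v0\<bar> \<le> 1 \<and> \<bar>Im v0 - d'\<bar> \<le> \<theta>' * pi / 2 \<and> exp (Re w) < \<rho> \<and> \<bar>s * (Im v0 - Im w)\<bar> < pi / 2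
        \<longrightarrow> integrable lborel (lk M s f v0 w)) \<and>
    (\<forall>v0. \<bar>Re v0\<bar> \<le> 1 \<and> \<bar>Im v0 - d'\<bar> \<le> \<theta>' * pi / 2 \<longrightarrow>
        Lam M s f v0 holomorphic_on {w. exp (Re w) < \<rho> \<and> \<bar>s * (Im v0 - Im w)\<bar> < pi / 2}) \<and>
    (\<forall>w p q y1 y2. exp (Re w) < \<rho> \<and> (\<forall>y. p < y \<and> y < q \<longrightarrow> \<bar>y - d'\<bar> \<le> \<theta>' * pi / 2 \<and> \<bar>s * (y - Im w)\<bar> < pi / 2)
        \<and> p < y1 \<and> y1 < q \<and> p < y2 \<and> y2 < q \<longrightarrow>
        Lam M s f (\<i> * complex_of_real y1) w = Lam M s f (\<i> * complex_of_real y2) w)"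
proof -
  obtain \<rho> where \<rho>: "\<rho> > 0" and LB: "\<forall>lo. \<exists>K\<ge>0. \<forall>v0 w t. \<bar>Re v0\<bar> \<le> 1 \<and> \<bar>Im v0 - d'\<bar> \<le> \<theta>' * pi / 2 \<and> lo \<le> Re w \<and>
      exp (Re w) < \<rho> \<and> \<bar>s * (Im v0 - Im w)\<bar> < pi / 2 \<longrightarrow> norm (lk M s f v0 w t) \<le> K / (1 + t\<^sup>2)"
    using lk_bound[OF sr s sg f ps th] by blast
  have hol: "f holomorphic_on sector d \<alpha>" using f by (simp add: AM_def)
  have insec: "\<bar>Im v0 - d\<bar> < \<alpha> * pi / 2" if "\<bar>Im v0 - d'\<bar> \<le> \<theta>' * pi / 2" for v0
    using proper_sub_in_sector(1)[OF ps that th(2)] by (simp add: sector_def)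
  have ig: "integrable lborel (\<lambda>t::real. K / (1 + t\<^sup>2))" for K
    using integrable_mult_right[OF integrable_inv_sq, of K] by simp
  have meas: "lk M s f v0 w \<in> borel_measurable lborel"
    if "\<bar>Im v0 - d'\<bar> \<le> \<theta>' * pi / 2" "\<bar>s * (Im v0 - Im w)\<bar> < pi / 2" for v0 w
    by (rule lk_meas[OF sr s sg f insec[OF that(1)] that(2)])
  have eMh: "eM M s holomorphic_on {w. \<bar>s * Im w\<bar> < pi / 2}" by (rule eM_holo[OF sr s sg])
  have INT: "integrable lborel (lk M s f v0 w)"
    if c: "\<bar>Re v0\<bar> \<le> 1 \<and> \<bar>Im v0 - d'\<bar> \<le> \<theta>' * pi / 2 \<and> exp (Re w) < \<rho> \<and> \<bar>s * (Im v0 - Im w)\<bar> < pi / 2" for v0 w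
  proof -
    obtain K where K0: "K \<ge> 0" and K: "\<And>t. norm (lk M s f v0 w t) \<le> K / (1 + t\<^sup>2)"
      using LB[rule_format, of "Re w"] c by blast
    show ?thesis
    proof (rule Bochner_Integration.integrable_bound[OF ig[of K] meas])
      show "\<bar>Im v0 - d'\<bar> \<le> \<theta>' * pi / 2" "\<bar>s * (Im v0 - Im w)\<bar> < pi / 2" using c by auto
      show "AE t in lborel. norm (lk M s f v0 w t) \<le> norm (K / (1 + t\<^sup>2))"
      proof (rule AE_I2)
        fix t :: real
        have "0 \<le> K / (1 + t\<^sup>2)" using K0 by (simp add: add_pos_nonneg)
        then show "norm (lk M s f v0 w t) \<le> norm (K / (1 + t\<^sup>2))" using K[of t] K0 by simp
      qed
    qed
  qed
  have HW: "Lam M s f v0 holomorphic_on {w. exp (Re w) < \<rho> \<and> \<bar>s * (Im v0 - Im w)\<bar> < pi / 2}"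
    if v0: "\<bar>Re v0\<bar> \<le> 1 \<and> \<bar>Im v0 - d'\<bar> \<le> \<theta>' * pi / 2" for v0
    unfolding Lam_def[abs_def]
  proof (rule holo_param_integral)
    let ?W = "{w. exp (Re w) < \<rho> \<and> \<bar>s * (Im v0 - Im w)\<bar> < pi / 2}"
    show oW: "open ?W"
      by (intro open_Collect_conj open_Collect_less continuous_intros)
    show "\<And>w. w \<in> ?W \<Longrightarrow> lk M s f v0 w \<in> borel_measurable lborel"
      using meas v0 by auto
    fix t :: real
    show "(\<lambda>w. lk M s f v0 w t) holomorphic_on ?W"
    proof (cases "t > 0")
      case True
      have "(\<lambda>w. eM M s (complex_of_real (ln t) + v0 - w)) holomorphic_on ?W"
        by (rule holomorphic_on_compose_gen[OF _ eMh, unfolded o_def]) (auto intro!: holomorphic_intros)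
      then show ?thesis using True unfolding lk_def by (auto intro!: holomorphic_intros)
    next
      case False then show ?thesis unfolding lk_def by (simp add: holomorphic_on_const)
    qed
  next
    let ?W = "{w. exp (Re w) < \<rho> \<and> \<bar>s * (Im v0 - Im w)\<bar> < pi / 2}"
    fix w0 assume w0: "w0 \<in> ?W"
    have oW: "open ?W" by (intro open_Collect_conj open_Collect_less continuous_intros)
    obtain r where r: "r > 0" "cball w0 r \<subseteq> ?W" using open_contains_cball[THEN iffD1, OF oW] w0 by blast
    obtain K where K: "\<And>w t. \<bar>Re v0\<bar> \<le> 1 \<and> \<bar>Im v0 - d'\<bar> \<le> \<theta>' * pi / 2 \<and> Re w0 - r \<le> Re w \<and>
      exp (Re w) < \<rho> \<and> \<bar>s * (Im v0 - Im w)\<bar> < pi / 2 \<Longrightarrow> norm (lk M s f v0 w t) \<le> K / (1 + t\<^sup>2)"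
      using LB[rule_format, of "Re w0 - r"] by blast
    show "\<exists>r>0. \<exists>g. cball w0 r \<subseteq> ?W \<and> integrable lborel g \<and> (\<forall>w\<in>cball w0 r. \<forall>t. norm (lk M s f v0 w t) \<le> g t)"
    proof (intro exI conjI ballI allI)
      show "r > 0" "cball w0 r \<subseteq> ?W" by (rule r)+
      show "integrable lborel (\<lambda>t::real. K / (1 + t\<^sup>2))" by (rule ig)
      fix w t assume w: "w \<in> cball w0 r"
      have "\<bar>Re w - Re w0\<bar> \<le> r" using w abs_Re_le_cmod[of "w - w0"] by (simp add: dist_norm norm_minus_commute)
      then show "norm (lk M s f v0 w t) \<le> K / (1 + t\<^sup>2)" using K[of w t] v0 w r(2) by auto
    qed
  qed
  have CONST: "Lam M s f (\<i> * complex_of_real y1) w = Lam M s f (\<i> * complex_of_real y2) w"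
    if wr: "exp (Re w) < \<rho>" and pq: "\<forall>y. p < y \<and> y < q \<longrightarrow> \<bar>y - d'\<bar> \<le> \<theta>' * pi / 2 \<and> \<bar>s * (y - Im w)\<bar> < pi / 2"
      and y: "p < y1" "y1 < q" "p < y2" "y2 < q" for w p q y1 y2
  proof -
    let ?V = "{v0. \<bar>Re v0\<bar> < 1 \<and> p < Im v0 \<and> Im v0 < q}"
    have oV: "open ?V" by (intro open_Collect_conj open_Collect_less continuous_intros)
    have cV: "convex ?V"
    proof -
      have "?V = {v0. Re v0 < 1} \<inter> {v0. Re v0 > -1} \<inter> {v0. Im v0 > p} \<inter> {v0. Im v0 < q}"
        by auto
      then show ?thesis by (simp add: convex_Int convex_halfspace_Re_lt convex_halfspace_Re_gt
            convex_halfspace_Im_lt convex_halfspace_Im_gt)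
    qed
    have HV: "(\<lambda>v0. Lam M s f v0 w) holomorphic_on ?V"
      unfolding Lam_def
    proof (rule holo_param_integral[OF oV])
      show "\<And>v0. v0 \<in> ?V \<Longrightarrow> lk M s f v0 w \<in> borel_measurable lborel"
        using meas pq by auto
      fix t :: real
      show "(\<lambda>v0. lk M s f v0 w t) holomorphic_on ?V"
      proof (cases "t > 0")
        case True
        have "(\<lambda>v0. eM M s (complex_of_real (ln t) + v0 - w)) holomorphic_on ?V"
          by (rule holomorphic_on_compose_gen[OF _ eMh, unfolded o_def]) (use pq in \<open>auto intro!: holomorphic_intros simp: abs_minus_commute\<close>)
        moreover have "(\<lambda>v0. f (complex_of_real (ln t) + v0)) holomorphic_on ?V"
          by (rule holomorphic_on_compose_gen[OF _ hol, unfolded o_def]) (use pq insec in \<open>auto intro!: holomorphic_intros simp: sector_def\<close>)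
        ultimately show ?thesis using True unfolding lk_def by (auto intro!: holomorphic_intros)
      next
        case False then show ?thesis unfolding lk_def by (simp add: holomorphic_on_const)
      qed
    next
      fix v0 assume v0: "v0 \<in> ?V"
      obtain r where r: "r > 0" "cball v0 r \<subseteq> ?V" using open_contains_cball[THEN iffD1, OF oV] v0 by blast
      obtain K where K: "\<And>v t. \<bar>Re v\<bar> \<le> 1 \<and> \<bar>Im v - d'\<bar> \<le> \<theta>' * pi / 2 \<and> Re w \<le> Re w \<and>
        exp (Re w) < \<rho> \<and> \<bar>s * (Im v - Im w)\<bar> < pi / 2 \<Longrightarrow> norm (lk M s f v w t) \<le> K / (1 + t\<^sup>2)"
        using LB[rule_format, of "Re w"] by blast
      show "\<exists>r>0. \<exists>g. cball v0 r \<subseteq> ?V \<and> integrable lborel g \<and> (\<forall>v\<in>cball v0 r. \<forall>t. norm (lk M s f v w t) \<le> g t)"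
      proof (intro exI conjI ballI allI)
        show "r > 0" "cball v0 r \<subseteq> ?V" by (rule r)+
        show "integrable lborel (\<lambda>t::real. K / (1 + t\<^sup>2))" by (rule ig)
        fix v t assume v: "v \<in> cball v0 r"
        then have "v \<in> ?V" using r(2) by blast
        then show "norm (lk M s f v w t) \<le> K / (1 + t\<^sup>2)" using K[of v t] pq wr by auto
      qed
    qed
    have D0: "((\<lambda>v0. Lam M s f v0 w) has_field_derivative 0) (at z within ?V)" if z: "z \<in> ?V" for z
    proof -
      obtain D where D: "((\<lambda>v0. Lam M s f v0 w) has_field_derivative D) (at z)"
        using HV oV z unfolding holomorphic_on_open[OF oV] by blast
      have "D = 0" by (rule deriv_zero_of_real_invariant[OF D Lam_translate])
      then show ?thesis using D by (auto intro: has_field_derivative_at_within)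
    qed
    obtain c where c: "\<And>x. x \<in> ?V \<Longrightarrow> Lam M s f x w = c"
      using has_field_derivative_zero_constant[OF cV D0] by blast
    have "\<i> * complex_of_real y1 \<in> ?V" "\<i> * complex_of_real y2 \<in> ?V" using y by auto
    then show ?thesis using c by simp
  qed
  show ?thesis
    apply (rule exI[of _ \<rho>])
    apply (intro conjI allI impI \<rho>)
    subgoal for v0 w by (rule INT) blast
    subgoal for v0 by (rule HW) blast
    subgoal for w p q y1 y2 by (rule CONST) blast+
    done
qed



lemma bsector_open: "open (bsector \<tau> \<delta> r)"
  unfolding bsector_def by (intro open_Collect_conj open_Collect_less continuous_intros)

lemma bsector_convex: assumes "r > 0" shows "convex (bsector \<tau> \<delta> r)"
proof -
  have e: "exp x < r \<longleftrightarrow> x < ln r" for x using assms by (metis exp_less_cancel_iff exp_ln)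
  have "bsector \<tau> \<delta> r = {w. Im w > \<tau> - \<delta> * pi / 2} \<inter> {w. Im w < \<tau> + \<delta> * pi / 2} \<inter> {w. Re w < ln r}"
    unfolding bsector_def e abs_less_iff by auto
  then show ?thesis by (simp add: convex_Int convex_halfspace_Re_lt convex_halfspace_Im_gt convex_halfspace_Im_lt)
qed

lemma bsector_mem: "w \<in> bsector \<tau> \<delta> r \<longleftrightarrow> \<bar>Im w - \<tau>\<bar> < \<delta> * pi / 2 \<and> exp (Re w) < r"
  by (simp add: bsector_def)

lemma abs_between:
  fixes y a b c e :: real
  assumes "min a b - e < y" "y < max a b + e"
  shows "\<bar>y - c\<bar> < max \<bar>a - c\<bar> \<bar>b - c\<bar> + e"
proof -
  have 1: "max a b - c \<le> max \<bar>a - c\<bar> \<bar>b - c\<bar>" by arith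
  have 2: "c - min a b \<le> max \<bar>a - c\<bar> \<bar>b - c\<bar>" by arith
  obtain m where m: "m = max \<bar>a - c\<bar> \<bar>b - c\<bar>" by blast
  obtain u where u: "u = max a b" by blast
  obtain l where l: "l = min a b" by blast
  have "y - c < m + e" using 1 assms(2) unfolding m[symmetric] u[symmetric] by linarith
  moreover have "c - y < m + e" using 2 assms(1) unfolding m[symmetric] l[symmetric] by linarith
  ultimately show ?thesis unfolding m[symmetric] by (simp only: abs_less_iff) (simp add: m)
qed

lemma div_e_less: "r > 0 \<Longrightarrow> r / exp 1 < (r::real)"
  by (simp add: divide_less_eq)

lemma th1_ex:
  assumes a: "\<alpha> > 0" and x: "x < \<alpha> * pi / 2"
  shows "\<exists>n::nat. x < \<alpha> * (1 - 1 / (real n + 2)) * pi / 2"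
proof -
  define b where "b = x / (pi / 2)"
  have b: "b < \<alpha>" using x by (simp add: b_def divide_less_eq mult.commute)
  obtain n :: nat where n: "\<alpha> / (\<alpha> - b) < real n" using reals_Archimedean2 by blast
  have ab: "\<alpha> - b > 0" using b by simp
  have "\<alpha> < real n * (\<alpha> - b)" using n ab by (simp add: divide_less_eq)
  also have "\<dots> \<le> (real n + 2) * (\<alpha> - b)" using ab by (intro mult_right_mono) auto
  finally have "\<alpha> / (real n + 2) < \<alpha> - b" by (simp add: divide_less_eq mult.commute)
  then have "b < \<alpha> * (1 - 1 / (real n + 2))" by (simp add: algebra_simps)
  then have "b * (pi / 2) < \<alpha> * (1 - 1 / (real n + 2)) * (pi / 2)" by (simp add: mult_strict_right_mono)
  then show ?thesis by (intro exI[of _ n]) (simp add: b_def)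
qed

theorem mainTheorem6:
  fixes M :: "nat \<Rightarrow> real" and d \<alpha> \<delta> \<delta>1 s :: real and f :: "complex \<Rightarrow> complex"
  assumes "strongly_regular M"
    and "\<alpha> > 0"
    and "f \<in> AM M d \<alpha>"
    and "0 < \<delta>" and "\<delta> < \<delta>1" and "\<delta>1 < gammaM M"
    and "s * \<delta>1 < 1" and "1 < s * gammaM M"
  shows "\<exists>\<rho> :: real \<Rightarrow> real. \<exists>F :: complex \<Rightarrow> complex.
    (\<forall>\<tau>. \<bar>\<tau> - d\<bar> < \<alpha> * pi / 2 \<longrightarrow>
       \<rho> \<tau> > 0 \<and>
       (\<forall>w\<in>bsector \<tau> \<delta> (\<rho> \<tau>). set_integrable lborel {0<..} (lap_integrand M s f \<tau> w)) \<and>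
       LapM M s f \<tau> holomorphic_on bsector \<tau> \<delta> (\<rho> \<tau>) \<and>
       (\<forall>w\<in>bsector \<tau> \<delta> (\<rho> \<tau>). F w = LapM M s f \<tau> w)) \<and>
    sectorial_region (\<Union>\<tau>\<in>{\<tau>. \<bar>\<tau> - d\<bar> < \<alpha> * pi / 2}. bsector \<tau> \<delta> (\<rho> \<tau>)) d (\<alpha> + \<delta>) \<and>
    F holomorphic_on (\<Union>\<tau>\<in>{\<tau>. \<bar>\<tau> - d\<bar> < \<alpha> * pi / 2}. bsector \<tau> \<delta> (\<rho> \<tau>))"
proof -
  note sr = assms(1) and a = assms(2) and f = assms(3) and sg = assms(8)
  have g0: "gammaM M > 0" using assms(4,5,6) by simp
  have s: "s > 0"
  proof (rule ccontr)
    assume "\<not> s > 0"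
    then have "s * gammaM M \<le> 0" using g0 by (simp add: mult_nonpos_nonneg)
    then show False using sg by simp
  qed
  have sd: "s * \<delta> < 1" using mult_strict_left_mono[OF assms(5) s] assms(7) by linarith
  have sdpi: "s * (\<delta> * pi / 2) < pi / 2" using sd by (simp add: mult.assoc[symmetric] mult_strict_right_mono)
  define th1 where "th1 n = \<alpha> * (1 - 1 / (real n + 2))" for n :: nat
  define th2 where "th2 n = \<alpha> * (1 - 1 / (2 * (real n + 2)))" for n :: nat
  have th1pos: "th1 n > 0" for n using a by (simp add: th1_def field_simps add_pos_nonneg)
  have th12: "th1 n < th2 n" for n using a by (simp add: th1_def th2_def field_simps add_pos_nonneg add_nonneg_pos)
  have th2lt: "th2 n < \<alpha>" for n using a by (simp add: th2_def field_simps)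
  have th2pos: "th2 n > 0" for n using th1pos th12 by (smt (verit))
  have ps: "proper_subsector d (th2 n) d \<alpha>" for n
    unfolding proper_subsector_def using th2pos[of n] th2lt[of n] a
    by (auto simp: divide_strict_right_mono mult_strict_right_mono)
  have th1mono: "th1 n \<le> th1 m" if "n \<le> m" for n m
    using that a unfolding th1_def by (intro mult_left_mono) (auto simp: frac_le)
  have th1pimono: "th1 n * pi / 2 \<le> th1 m * pi / 2" if "n \<le> m" for n m
    using th1mono[OF that] by (intro divide_right_mono mult_right_mono) auto
  have ex: "\<forall>n. \<exists>\<rho>>0.
    (\<forall>v0 w. \<bar>Re v0\<bar> \<le> 1 \<and> \<bar>Im v0 - d\<bar> \<le> th1 n * pi / 2 \<and> exp (Re w) < \<rho> \<and> \<bar>s * (Im v0 - Im w)\<bar> < pi / 2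
        \<longrightarrow> integrable lborel (lk M s f v0 w)) \<and>
    (\<forall>v0. \<bar>Re v0\<bar> \<le> 1 \<and> \<bar>Im v0 - d\<bar> \<le> th1 n * pi / 2 \<longrightarrow>
        Lam M s f v0 holomorphic_on {w. exp (Re w) < \<rho> \<and> \<bar>s * (Im v0 - Im w)\<bar> < pi / 2}) \<and>
    (\<forall>w p q y1 y2. exp (Re w) < \<rho> \<and> (\<forall>y. p < y \<and> y < q \<longrightarrow> \<bar>y - d\<bar> \<le> th1 n * pi / 2 \<and> \<bar>s * (y - Im w)\<bar> < pi / 2)
        \<and> p < y1 \<and> y1 < q \<and> p < y2 \<and> y2 < q \<longrightarrow>
        Lam M s f (\<i> * complex_of_real y1) w = Lam M s f (\<i> * complex_of_real y2) w)"
    using Lam_main[OF sr s sg f ps th1pos th12] by blast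
  obtain \<rho>s where H: "\<forall>n. \<rho>s n > 0 \<and>
    (\<forall>v0 w. \<bar>Re v0\<bar> \<le> 1 \<and> \<bar>Im v0 - d\<bar> \<le> th1 n * pi / 2 \<and> exp (Re w) < \<rho>s n \<and> \<bar>s * (Im v0 - Im w)\<bar> < pi / 2
        \<longrightarrow> integrable lborel (lk M s f v0 w)) \<and>
    (\<forall>v0. \<bar>Re v0\<bar> \<le> 1 \<and> \<bar>Im v0 - d\<bar> \<le> th1 n * pi / 2 \<longrightarrow>
        Lam M s f v0 holomorphic_on {w. exp (Re w) < \<rho>s n \<and> \<bar>s * (Im v0 - Im w)\<bar> < pi / 2}) \<and>
    (\<forall>w p q y1 y2. exp (Re w) < \<rho>s n \<and> (\<forall>y. p < y \<and> y < q \<longrightarrow> \<bar>y - d\<bar> \<le> th1 n * pi / 2 \<and> \<bar>s * (y - Im w)\<bar> < pi / 2)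
        \<and> p < y1 \<and> y1 < q \<and> p < y2 \<and> y2 < q \<longrightarrow>
        Lam M s f (\<i> * complex_of_real y1) w = Lam M s f (\<i> * complex_of_real y2) w)"
    using choice[OF ex] by blast
  have \<rho>s: "\<And>n. \<rho>s n > 0" using H by blast
  have Q1: "\<And>n v0 w. \<bar>Re v0\<bar> \<le> 1 \<Longrightarrow> \<bar>Im v0 - d\<bar> \<le> th1 n * pi / 2 \<Longrightarrow> exp (Re w) < \<rho>s n \<Longrightarrow> \<bar>s * (Im v0 - Im w)\<bar> < pi / 2
        \<Longrightarrow> integrable lborel (lk M s f v0 w)" using H by blast
  have Q2: "\<And>n v0. \<bar>Re v0\<bar> \<le> 1 \<Longrightarrow> \<bar>Im v0 - d\<bar> \<le> th1 n * pi / 2 \<Longrightarrow>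
        Lam M s f v0 holomorphic_on {w. exp (Re w) < \<rho>s n \<and> \<bar>s * (Im v0 - Im w)\<bar> < pi / 2}" using H by blast
  have Q3: "\<And>n w p q y1 y2. exp (Re w) < \<rho>s n \<Longrightarrow> (\<forall>y. p < y \<and> y < q \<longrightarrow> \<bar>y - d\<bar> \<le> th1 n * pi / 2 \<and> \<bar>s * (y - Im w)\<bar> < pi / 2)
        \<Longrightarrow> p < y1 \<Longrightarrow> y1 < q \<Longrightarrow> p < y2 \<Longrightarrow> y2 < q \<Longrightarrow>
        Lam M s f (\<i> * complex_of_real y1) w = Lam M s f (\<i> * complex_of_real y2) w"
    using H by blast
  define T where "T = {\<tau>. \<bar>\<tau> - d\<bar> < \<alpha> * pi / 2}"
  define N where "N \<tau> = (LEAST n. \<bar>\<tau> - d\<bar> < th1 n * pi / 2)" for \<tau>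
  have Nex: "\<exists>n. \<bar>\<tau> - d\<bar> < th1 n * pi / 2" if "\<tau> \<in> T" for \<tau>
    using th1_ex[OF a, of "\<bar>\<tau> - d\<bar>"] that unfolding T_def th1_def by auto
  have NI: "\<bar>\<tau> - d\<bar> < th1 (N \<tau>) * pi / 2" if "\<tau> \<in> T" for \<tau>
    unfolding N_def by (rule LeastI_ex[where P="\<lambda>n. \<bar>\<tau> - d\<bar> < th1 n * pi / 2", OF Nex[OF that]])
  have Nle: "N \<tau> \<le> n" if "\<bar>\<tau> - d\<bar> < th1 n * pi / 2" for \<tau> n
    unfolding N_def by (rule Least_le[where P="\<lambda>n. \<bar>\<tau> - d\<bar> < th1 n * pi / 2", OF that])
  define \<rho> where "\<rho> \<tau> = Min (\<rho>s ` {..N \<tau>})" for \<tau>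
  have \<rho>pos: "\<rho> \<tau> > 0" for \<tau> unfolding \<rho>_def using \<rho>s by (simp add: Min_gr_iff)
  have \<rho>le: "\<rho> \<tau> \<le> \<rho>s (N \<tau>)" for \<tau> unfolding \<rho>_def by (intro Min_le) auto
  have \<rho>mono: "\<rho> \<tau>' \<le> \<rho> \<tau>" if "\<tau>' \<in> T" "\<bar>\<tau> - d\<bar> \<le> \<bar>\<tau>' - d\<bar>" for \<tau> \<tau>'
  proof -
    have "N \<tau> \<le> N \<tau>'" using NI[OF that(1)] that(2) by (intro Nle) linarith
    then show ?thesis unfolding \<rho>_def by (intro Min_antimono) auto
  qed
  have \<rho>low: "\<exists>r0>0. \<forall>\<tau>. \<bar>\<tau> - d\<bar> \<le> b * pi / 2 \<longrightarrow> r0 \<le> \<rho> \<tau>" if b: "b < \<alpha>" for b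
  proof -
    have "b * pi / 2 < \<alpha> * pi / 2" using b by (simp add: divide_strict_right_mono)
    then obtain n0 where n0: "b * pi / 2 < th1 n0 * pi / 2" using th1_ex[OF a, of "b * pi / 2"] unfolding th1_def by auto
    show ?thesis
    proof (intro exI[of _ "Min (\<rho>s ` {..n0})"] conjI allI impI)
      show "Min (\<rho>s ` {..n0}) > 0" using \<rho>s by (simp add: Min_gr_iff)
      fix \<tau> assume "\<bar>\<tau> - d\<bar> \<le> b * pi / 2"
      then have "N \<tau> \<le> n0" using n0 by (intro Nle) linarith
      then show "Min (\<rho>s ` {..n0}) \<le> \<rho> \<tau>" unfolding \<rho>_def by (intro Min_antimono) auto
    qed
  qed
  have adm: "\<bar>Re (\<i> * complex_of_real \<tau>)\<bar> \<le> 1 \<and> \<bar>Im (\<i> * complex_of_real \<tau>) - d\<bar> \<le> th1 (N \<tau>) * pi / 2 \<and>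
      exp (Re w) < \<rho>s (N \<tau>) \<and> \<bar>s * (Im (\<i> * complex_of_real \<tau>) - Im w)\<bar> < pi / 2"
    if \<tau>: "\<tau> \<in> T" and w: "w \<in> bsector \<tau> \<delta> (\<rho> \<tau>)" for \<tau> w
  proof -
    have "\<bar>\<tau> - Im w\<bar> < \<delta> * pi / 2" using w by (simp add: bsector_def abs_minus_commute)
    then have "s * \<bar>\<tau> - Im w\<bar> < s * (\<delta> * pi / 2)" by (rule mult_strict_left_mono[OF _ s])
    moreover have "\<bar>s * (\<tau> - Im w)\<bar> = s * \<bar>\<tau> - Im w\<bar>" using s by (simp add: abs_mult)
    ultimately have "\<bar>s * (\<tau> - Im w)\<bar> < pi / 2" using sdpi by linarith
    moreover have "exp (Re w) < \<rho>s (N \<tau>)" using w \<rho>le[of \<tau>] by (simp add: bsector_def)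
    ultimately show ?thesis using NI[OF \<tau>] by simp
  qed
  have cons: "LapM M s f \<tau>1 w = LapM M s f \<tau>2 w"
    if t1: "\<tau>1 \<in> T" and t2: "\<tau>2 \<in> T" and w1: "w \<in> bsector \<tau>1 \<delta> (\<rho> \<tau>1)" and w2: "w \<in> bsector \<tau>2 \<delta> (\<rho> \<tau>2)"
    for \<tau>1 \<tau>2 w
  proof -
    define n where "n = max (N \<tau>1) (N \<tau>2)"
    have wn: "exp (Re w) < \<rho>s n"
    proof (cases "N \<tau>1 \<le> N \<tau>2")
      case True then show ?thesis using w2 \<rho>le[of \<tau>2] by (simp add: n_def max_def bsector_def)
    next
      case False then show ?thesis using w1 \<rho>le[of \<tau>1] by (simp add: n_def max_def bsector_def)
    qed
    have a1: "\<bar>\<tau>1 - d\<bar> < th1 n * pi / 2"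
    proof -
      have "N \<tau>1 \<le> n" by (simp add: n_def)
      then have "th1 (N \<tau>1) * pi / 2 \<le> th1 n * pi / 2" by (rule th1pimono)
      then show ?thesis using NI[OF t1] by linarith
    qed
    have a2: "\<bar>\<tau>2 - d\<bar> < th1 n * pi / 2"
    proof -
      have "N \<tau>2 \<le> n" by (simp add: n_def)
      then have "th1 (N \<tau>2) * pi / 2 \<le> th1 n * pi / 2" by (rule th1pimono)
      then show ?thesis using NI[OF t2] by linarith
    qed
    have b1: "\<bar>\<tau>1 - Im w\<bar> < \<delta> * pi / 2" using w1 by (simp add: bsector_def abs_minus_commute)
    have b2: "\<bar>\<tau>2 - Im w\<bar> < \<delta> * pi / 2" using w2 by (simp add: bsector_def abs_minus_commute)
    define e1 where "e1 = th1 n * pi / 2 - max \<bar>\<tau>1 - d\<bar> \<bar>\<tau>2 - d\<bar>"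
    define e2 where "e2 = pi / (2 * s) - \<delta> * pi / 2"
    have e1: "e1 > 0" using a1 a2 by (simp add: e1_def)
    have e2: "e2 > 0"
    proof -
      have "\<delta> * pi / 2 < pi / (2 * s)" using sdpi s by (simp add: field_simps)
      then show ?thesis by (simp add: e2_def)
    qed
    define \<epsilon> where "\<epsilon> = min e1 e2"
    have \<epsilon>: "\<epsilon> > 0" using e1 e2 by (simp add: \<epsilon>_def)
    define p where "p = min \<tau>1 \<tau>2 - \<epsilon>"
    define q where "q = max \<tau>1 \<tau>2 + \<epsilon>"
    have pq: "\<forall>y. p < y \<and> y < q \<longrightarrow> \<bar>y - d\<bar> \<le> th1 n * pi / 2 \<and> \<bar>s * (y - Im w)\<bar> < pi / 2"
    proof (intro allI impI conjI)
      fix y assume y: "p < y \<and> y < q"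
      have "\<bar>y - d\<bar> < max \<bar>\<tau>1 - d\<bar> \<bar>\<tau>2 - d\<bar> + \<epsilon>"
        by (rule abs_between) (use y in \<open>auto simp: p_def q_def\<close>)
      also have "\<dots> \<le> th1 n * pi / 2"
      proof -
        have "\<epsilon> \<le> e1" by (simp add: \<epsilon>_def)
        then show ?thesis unfolding e1_def by linarith
      qed
      finally show "\<bar>y - d\<bar> \<le> th1 n * pi / 2" by simp
      have "\<bar>y - Im w\<bar> < max \<bar>\<tau>1 - Im w\<bar> \<bar>\<tau>2 - Im w\<bar> + \<epsilon>"
        by (rule abs_between) (use y in \<open>auto simp: p_def q_def\<close>)
      also have "\<dots> < \<delta> * pi / 2 + e2"
      proof -
        have "max \<bar>\<tau>1 - Im w\<bar> \<bar>\<tau>2 - Im w\<bar> < \<delta> * pi / 2" using b1 b2 by (simp only: max_less_iff_conj)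
        moreover have "\<epsilon> \<le> e2" by (simp add: \<epsilon>_def)
        ultimately show ?thesis by linarith
      qed
      also have "\<dots> = pi / (2 * s)" by (simp add: e2_def)
      finally have "s * \<bar>y - Im w\<bar> < s * (pi / (2 * s))" by (rule mult_strict_left_mono[OF _ s])
      moreover have "s * (pi / (2 * s)) = pi / 2" using s by simp
      moreover have "\<bar>s * (y - Im w)\<bar> = s * \<bar>y - Im w\<bar>" using s by (simp add: abs_mult)
      ultimately show "\<bar>s * (y - Im w)\<bar> < pi / 2" by linarith
    qed
    have "Lam M s f (\<i> * complex_of_real \<tau>1) w = Lam M s f (\<i> * complex_of_real \<tau>2) w"
      by (rule Q3[OF wn pq]) (use \<epsilon> in \<open>auto simp: p_def q_def\<close>)
    then show ?thesis by (simp add: LapM_Lam)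
  qed
  define F where "F w = LapM M s f (SOME \<tau>. \<tau> \<in> T \<and> w \<in> bsector \<tau> \<delta> (\<rho> \<tau>)) w" for w
  have Feq: "F w = LapM M s f \<tau> w" if "\<tau> \<in> T" "w \<in> bsector \<tau> \<delta> (\<rho> \<tau>)" for \<tau> w
  proof -
    let ?\<tau> = "SOME \<tau>. \<tau> \<in> T \<and> w \<in> bsector \<tau> \<delta> (\<rho> \<tau>)"
    have "?\<tau> \<in> T \<and> w \<in> bsector ?\<tau> \<delta> (\<rho> ?\<tau>)" by (rule someI[of _ \<tau>]) (use that in auto)
    then show ?thesis using cons[of ?\<tau> \<tau> w] that by (simp add: F_def)
  qed
  have hol\<tau>: "LapM M s f \<tau> holomorphic_on bsector \<tau> \<delta> (\<rho> \<tau>)" if \<tau>: "\<tau> \<in> T" for \<tau>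
  proof -
    have e: "LapM M s f \<tau> = Lam M s f (\<i> * complex_of_real \<tau>)" by (rule ext) (simp add: LapM_Lam)
    have "Lam M s f (\<i> * complex_of_real \<tau>) holomorphic_on
        {w. exp (Re w) < \<rho>s (N \<tau>) \<and> \<bar>s * (Im (\<i> * complex_of_real \<tau>) - Im w)\<bar> < pi / 2}"
      by (rule Q2) (use NI[OF \<tau>] in auto)
    moreover have "bsector \<tau> \<delta> (\<rho> \<tau>) \<subseteq> {w. exp (Re w) < \<rho>s (N \<tau>) \<and> \<bar>s * (Im (\<i> * complex_of_real \<tau>) - Im w)\<bar> < pi / 2}"
      using adm[OF \<tau>] by blast
    ultimately show ?thesis unfolding e by (rule holomorphic_on_subset)
  qed
  have int\<tau>: "set_integrable lborel {0<..} (lap_integrand M s f \<tau> w)" if \<tau>: "\<tau> \<in> T" and w: "w \<in> bsector \<tau> \<delta> (\<rho> \<tau>)" for \<tau> w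
    unfolding lap_integrable_iff using adm[OF \<tau> w] by (intro Q1[of _ "N \<tau>"]) auto
  define U where "U = (\<Union>\<tau>\<in>T. bsector \<tau> \<delta> (\<rho> \<tau>))"
  have Uopen: "open U" unfolding U_def by (intro open_UN ballI bsector_open)
  have Fhol: "F holomorphic_on U"
    unfolding holomorphic_on_open[OF Uopen]
  proof
    fix w assume "w \<in> U"
    then obtain \<tau> where \<tau>: "\<tau> \<in> T" and w: "w \<in> bsector \<tau> \<delta> (\<rho> \<tau>)" unfolding U_def by blast
    obtain D where D: "(LapM M s f \<tau> has_field_derivative D) (at w)"
      using hol\<tau>[OF \<tau>] w unfolding holomorphic_on_open[OF bsector_open] by blast
    have "(F has_field_derivative D) (at w)"
      by (rule has_field_derivative_transform_within_open[OF D bsector_open w]) (use Feq \<tau> in auto)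
    then show "\<exists>f'. (F has_field_derivative f') (at w)" by blast
  qed
  have dT: "d \<in> T" using a by (simp add: T_def)
  define z0 where "z0 = Complex (ln (\<rho> d) - 1) d"
  have z0: "z0 \<in> bsector d \<delta> (\<rho> d)"
    using div_e_less[OF \<rho>pos[of d]] \<rho>pos[of d] assms(4) by (simp add: z0_def bsector_def exp_diff)
  have Usec: "U \<subseteq> sector d (\<alpha> + \<delta>)"
  proof
    fix w assume "w \<in> U"
    then obtain \<tau> where \<tau>: "\<tau> \<in> T" and w: "w \<in> bsector \<tau> \<delta> (\<rho> \<tau>)" unfolding U_def by blast
    have "\<bar>Im w - d\<bar> \<le> \<bar>Im w - \<tau>\<bar> + \<bar>\<tau> - d\<bar>" by linarith
    also have "\<dots> < \<delta> * pi / 2 + \<alpha> * pi / 2" using \<tau> w by (intro add_strict_mono) (auto simp: T_def bsector_def)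
    also have "\<dots> = (\<alpha> + \<delta>) * pi / 2" by (simp add: field_simps)
    finally show "w \<in> sector d (\<alpha> + \<delta>)" by (simp add: sector_def)
  qed
  have Ubeta: "\<exists>\<rho>0>0. bsector d \<beta> \<rho>0 \<subseteq> U" if \<beta>: "0 < \<beta>" "\<beta> < \<alpha> + \<delta>" for \<beta>
  proof -
    define \<beta>' where "\<beta>' = (max (\<beta> - \<delta>) 0 + \<alpha>) / 2"
    have \<beta>'a: "\<beta>' < \<alpha>" using \<beta> a by (simp add: \<beta>'_def max_def)
    have \<beta>'b: "\<beta> - \<delta> < \<beta>'" "0 < \<beta>'" using \<beta> a by (auto simp: \<beta>'_def max_def)
    obtain r0 where r0: "r0 > 0" and r0le: "\<And>\<tau>. \<bar>\<tau> - d\<bar> \<le> \<beta>' * pi / 2 \<Longrightarrow> r0 \<le> \<rho> \<tau>"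
      using \<rho>low[OF \<beta>'a] by blast
    show ?thesis
    proof (intro exI[of _ r0] conjI subsetI r0)
      fix w assume w: "w \<in> bsector d \<beta> r0"
      define c where "c = \<beta>' * pi / 2"
      define x where "x = Im w - d"
      have c0: "c > 0" using \<beta>'b by (simp add: c_def)
      have cd: "(\<beta> - \<delta>) * pi / 2 < c" using \<beta>'b by (simp add: c_def divide_strict_right_mono)
      have xb: "\<bar>x\<bar> < \<beta> * pi / 2" using w by (simp add: bsector_def x_def)
      define \<tau> where "\<tau> = d + max (- c) (min c x)"
      have t1: "\<bar>\<tau> - d\<bar> \<le> c" using c0 by (simp add: \<tau>_def)
      have t2: "\<bar>Im w - \<tau>\<bar> < \<delta> * pi / 2"
      proof -
        have dp: "\<delta> * pi / 2 > 0" using assms(4) by simp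
        have e: "(\<beta> - \<delta>) * pi / 2 = \<beta> * pi / 2 - \<delta> * pi / 2" by (simp add: left_diff_distrib diff_divide_distrib)
        have "Im w - \<tau> = x - max (- c) (min c x)" by (simp add: \<tau>_def x_def)
        moreover have "\<bar>x - max (- c) (min c x)\<bar> < \<delta> * pi / 2"
        proof (cases "x < - c")
          case True
          then have "x - max (- c) (min c x) = x + c" using c0 by simp
          then show ?thesis using True xb cd e dp unfolding abs_less_iff by linarith
        next
          case False
          show ?thesis
          proof (cases "x > c")
            case True
            then have "x - max (- c) (min c x) = x - c" using c0 by simp
            then show ?thesis using True xb cd e dp unfolding abs_less_iff by linarith
          next
            case False
            then have "x - max (- c) (min c x) = 0" using \<open>\<not> x < - c\<close> by simp
            then show ?thesis using dp by simp
          qed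
        qed
        ultimately show ?thesis by simp
      qed
      have tT: "\<tau> \<in> T"
      proof -
        have "c < \<alpha> * pi / 2" using \<beta>'a by (simp add: c_def divide_strict_right_mono)
        then show ?thesis using t1 by (simp add: T_def)
      qed
      have "exp (Re w) < \<rho> \<tau>" using w r0le[of \<tau>] t1 by (simp add: bsector_def c_def)
      then have "w \<in> bsector \<tau> \<delta> (\<rho> \<tau>)" using t2 by (simp add: bsector_def)
      then show "w \<in> U" using tT unfolding U_def by blast
    qed
  qed
  have Uconn: "connected U"
  proof -
    define x0 where "x0 \<tau> = ln (\<rho> \<tau>) - 1" for \<tau>
    define S where "S \<tau> = bsector \<tau> \<delta> (\<rho> \<tau>) \<union> closed_segment (Complex (x0 \<tau>) \<tau>) (Complex (x0 \<tau>) d) \<union> bsector d \<delta> (\<rho> d)" for \<tau>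
    have x0: "exp (x0 \<tau>) < \<rho> \<tau>" for \<tau> using div_e_less[OF \<rho>pos[of \<tau>]] \<rho>pos[of \<tau>] by (simp add: x0_def exp_diff)
    have segU: "closed_segment (Complex (x0 \<tau>) \<tau>) (Complex (x0 \<tau>) d) \<subseteq> U" if \<tau>: "\<tau> \<in> T" for \<tau>
    proof
      fix z assume "z \<in> closed_segment (Complex (x0 \<tau>) \<tau>) (Complex (x0 \<tau>) d)"
      then obtain u where u: "0 \<le> u" "u \<le> 1" and z: "z = (1 - u) *\<^sub>R Complex (x0 \<tau>) \<tau> + u *\<^sub>R Complex (x0 \<tau>) d"
        unfolding closed_segment_def by blast
      have Rez: "Re z = x0 \<tau>" unfolding z by (simp add: algebra_simps)
      have Imz: "Im z - d = (1 - u) * (\<tau> - d)" unfolding z by (simp add: algebra_simps)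
      have "\<bar>Im z - d\<bar> = (1 - u) * \<bar>\<tau> - d\<bar>" using u Imz by (simp add: abs_mult)
      also have "\<dots> \<le> \<bar>\<tau> - d\<bar>" using u by (simp add: mult_left_le_one_le)
      finally have zd: "\<bar>Im z - d\<bar> \<le> \<bar>\<tau> - d\<bar>" .
      have zT: "Im z \<in> T" using zd \<tau> by (simp add: T_def)
      have "exp (Re z) < \<rho> (Im z)" using x0[of \<tau>] \<rho>mono[OF \<tau> zd] by (simp add: Rez)
      then have "z \<in> bsector (Im z) \<delta> (\<rho> (Im z))" using assms(4) by (simp add: bsector_def)
      then show "z \<in> U" using zT unfolding U_def by blast
    qed
    have eqU: "U = \<Union> (S ` T)"
    proof
      show "U \<subseteq> \<Union> (S ` T)" unfolding U_def S_def by blast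
      show "\<Union> (S ` T) \<subseteq> U"
      proof
        fix z assume "z \<in> \<Union> (S ` T)"
        then obtain \<tau> where \<tau>: "\<tau> \<in> T" and z: "z \<in> S \<tau>" by blast
        show "z \<in> U" using z segU[OF \<tau>] \<tau> dT unfolding S_def U_def by blast
      qed
    qed
    have cS: "connected (S \<tau>)" if \<tau>: "\<tau> \<in> T" for \<tau>
    proof -
      have c1: "connected (bsector \<tau> \<delta> (\<rho> \<tau>))" by (rule convex_connected[OF bsector_convex[OF \<rho>pos]])
      have c2: "connected (closed_segment (Complex (x0 \<tau>) \<tau>) (Complex (x0 \<tau>) d))" by (rule connected_segment)
      have c3: "connected (bsector d \<delta> (\<rho> d))" by (rule convex_connected[OF bsector_convex[OF \<rho>pos]])
      have i1: "Complex (x0 \<tau>) \<tau> \<in> bsector \<tau> \<delta> (\<rho> \<tau>)" using x0[of \<tau>] assms(4) by (simp add: bsector_def)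
      have i2: "Complex (x0 \<tau>) d \<in> bsector d \<delta> (\<rho> d)"
        using x0[of \<tau>] \<rho>mono[OF \<tau>, of d] assms(4) by (simp add: bsector_def)
      have "connected (bsector \<tau> \<delta> (\<rho> \<tau>) \<union> closed_segment (Complex (x0 \<tau>) \<tau>) (Complex (x0 \<tau>) d))"
        by (rule connected_Un[OF c1 c2]) (use i1 in blast)
      then show ?thesis unfolding S_def
        by (rule connected_Un[OF _ c3]) (use i2 in blast)
    qed
    have "connected (\<Union> (S ` T))"
    proof (rule connected_Union)
      show "\<And>X. X \<in> S ` T \<Longrightarrow> connected X" using cS by blast
      have "z0 \<in> \<Inter> (S ` T)" using z0 unfolding S_def by blast
      then show "\<Inter> (S ` T) \<noteq> {}" by blast
    qed
    then show ?thesis using eqU by simp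
  qed
  have Une: "U \<noteq> {}" using z0 dT unfolding U_def by blast
  show ?thesis
  proof (intro exI[of _ \<rho>] exI[of _ F] conjI allI impI ballI)
    fix \<tau> assume \<tau>: "\<bar>\<tau> - d\<bar> < \<alpha> * pi / 2"
    then have \<tau>T: "\<tau> \<in> T" by (simp add: T_def)
    show "\<rho> \<tau> > 0" by (rule \<rho>pos)
    show "LapM M s f \<tau> holomorphic_on bsector \<tau> \<delta> (\<rho> \<tau>)" by (rule hol\<tau>[OF \<tau>T])
    fix w assume w: "w \<in> bsector \<tau> \<delta> (\<rho> \<tau>)"
    show "set_integrable lborel {0<..} (lap_integrand M s f \<tau> w)" by (rule int\<tau>[OF \<tau>T w])
    show "F w = LapM M s f \<tau> w" by (rule Feq[OF \<tau>T w])
  next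
    show "sectorial_region (\<Union>\<tau>\<in>{\<tau>. \<bar>\<tau> - d\<bar> < \<alpha> * pi / 2}. bsector \<tau> \<delta> (\<rho> \<tau>)) d (\<alpha> + \<delta>)"
      unfolding T_def[symmetric] U_def[symmetric] sectorial_region_def
      using Uopen Uconn Une Usec Ubeta by blast
  next
    show "F holomorphic_on (\<Union>\<tau>\<in>{\<tau>. \<bar>\<tau> - d\<bar> < \<alpha> * pi / 2}. bsector \<tau> \<delta> (\<rho> \<tau>))"
      unfolding T_def[symmetric] U_def[symmetric] by (rule Fhol)
  qed
qed


end
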